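(* Let $\mathbf K$ be an M$\Delta$C generated as a thick subcategory by a single object $G$. If $A\in\mathbf K$ and $V(A)=V(\mathcal S_1)\sqcup V(\mathcal S_2)$ (disjoint union) for collections of objects $\mathcal S_1,\mathcal S_2$, then there exist objects $A_1,A_2\in\mathbf K$ with $V(\mathcal S_i)=V(A_i)$ for $i=1,2$.
   Context: M$\Delta$C: triangulated category with monoidal structure $(\otimes,\mathbf 1)$, $\otimes$ exact in each variable. Prime ideal: proper thick two-sided ideal $\mathbf P$ with $\mathbf I\otimes\mathbf J\subseteq\mathbf P\Rightarrow\mathbf I\subseteq\mathbf P$ or $\mathbf J\subseteq\mathbf P$ for thick ideals. $\operatorname{Spc}\mathbf K$: set of primes; $V(A)=\{\mathbf P:A\notin\mathbf P\}$ and $V(\mathcal S)=\bigcap_{A\in\mathcal S}V(A)$. *)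

theory Defs
  imports Main
begin

text \<open>
  Morphisms are typed through the hom-sets: f : X \<rightarrow> Y means
  f \<in> hom K X Y.  Composition is written  cmp K g f  (= g after f).
\<close>

record ('o, 'm) mdc_struct =
  obj   :: "'o set"
  hom   :: "'o \<Rightarrow> 'o \<Rightarrow> 'm set"
  cmp   :: "'m \<Rightarrow> 'm \<Rightarrow> 'm"
  idm   :: "'o \<Rightarrow> 'm"
  madd  :: "'m \<Rightarrow> 'm \<Rightarrow> 'm"
  mzero :: "'o \<Rightarrow> 'o \<Rightarrow> 'm"
  mneg  :: "'m \<Rightarrow> 'm"
  shO   :: "'o \<Rightarrow> 'o"
  shM   :: "'m \<Rightarrow> 'm"
  tri   :: "('o \<times> 'o \<times> 'o \<times> 'm \<times> 'm \<times> 'm) set"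
  tensO :: "'o \<Rightarrow> 'o \<Rightarrow> 'o"
  tensM :: "'m \<Rightarrow> 'm \<Rightarrow> 'm"
  unitO :: "'o"
  assoc :: "'o \<Rightarrow> 'o \<Rightarrow> 'o \<Rightarrow> 'm"
  lunit :: "'o \<Rightarrow> 'm"
  runit :: "'o \<Rightarrow> 'm"
  sigL  :: "'o \<Rightarrow> 'o \<Rightarrow> 'm"   \<comment> \<open>sigL X W : (\<Sigma>X)\<otimes>W \<rightarrow> \<Sigma>(X\<otimes>W)\<close>
  sigR  :: "'o \<Rightarrow> 'o \<Rightarrow> 'm"   \<comment> \<open>sigR W X : W\<otimes>(\<Sigma>X) \<rightarrow> \<Sigma>(W\<otimes>X)\<close>

definition is_iso :: "('o,'m) mdc_struct \<Rightarrow> 'm \<Rightarrow> 'o \<Rightarrow> 'o \<Rightarrow> bool" where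
  "is_iso K f X Y \<longleftrightarrow> f \<in> hom K X Y \<and>
     (\<exists>g \<in> hom K Y X. cmp K g f = idm K X \<and> cmp K f g = idm K Y)"

definition isomorphic :: "('o,'m) mdc_struct \<Rightarrow> 'o \<Rightarrow> 'o \<Rightarrow> bool" where
  "isomorphic K X Y \<longleftrightarrow> (\<exists>f. is_iso K f X Y)"

definition category_ax :: "('o,'m) mdc_struct \<Rightarrow> bool" where
  "category_ax K \<longleftrightarrow>
     (\<forall>X Y f. f \<in> hom K X Y \<longrightarrow> X \<in> obj K \<and> Y \<in> obj K) \<and>
     (\<forall>X \<in> obj K. idm K X \<in> hom K X X) \<and>
     (\<forall>X Y Z f g. f \<in> hom K X Y \<longrightarrow> g \<in> hom K Y Z \<longrightarrow> cmp K g f \<in> hom K X Z) \<and>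
     (\<forall>X Y f. f \<in> hom K X Y \<longrightarrow> cmp K f (idm K X) = f \<and> cmp K (idm K Y) f = f) \<and>
     (\<forall>W X Y Z f g h. f \<in> hom K W X \<longrightarrow> g \<in> hom K X Y \<longrightarrow> h \<in> hom K Y Z \<longrightarrow>
        cmp K h (cmp K g f) = cmp K (cmp K h g) f)"

definition preadditive_ax :: "('o,'m) mdc_struct \<Rightarrow> bool" where
  "preadditive_ax K \<longleftrightarrow>
     (\<forall>X \<in> obj K. \<forall>Y \<in> obj K.
        mzero K X Y \<in> hom K X Y \<and>
        (\<forall>f \<in> hom K X Y. \<forall>g \<in> hom K X Y. madd K f g \<in> hom K X Y) \<and>
        (\<forall>f \<in> hom K X Y. mneg K f \<in> hom K X Y) \<and>
        (\<forall>f \<in> hom K X Y. \<forall>g \<in> hom K X Y. \<forall>h \<in> hom K X Y.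
            madd K (madd K f g) h = madd K f (madd K g h)) \<and>
        (\<forall>f \<in> hom K X Y. \<forall>g \<in> hom K X Y. madd K f g = madd K g f) \<and>
        (\<forall>f \<in> hom K X Y. madd K f (mzero K X Y) = f) \<and>
        (\<forall>f \<in> hom K X Y. madd K f (mneg K f) = mzero K X Y)) \<and>
     (\<forall>X Y Z f g h. f \<in> hom K X Y \<longrightarrow> g \<in> hom K X Y \<longrightarrow> h \<in> hom K Y Z \<longrightarrow>
        cmp K h (madd K f g) = madd K (cmp K h f) (cmp K h g)) \<and>
     (\<forall>X Y Z f g h. f \<in> hom K X Y \<longrightarrow> g \<in> hom K Y Z \<longrightarrow> h \<in> hom K Y Z \<longrightarrow>
        cmp K (madd K g h) f = madd K (cmp K g f) (cmp K h f))"

definition zero_obj :: "('o,'m) mdc_struct \<Rightarrow> 'o \<Rightarrow> bool" where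
  "zero_obj K Z \<longleftrightarrow> Z \<in> obj K \<and>
     (\<forall>X \<in> obj K. hom K Z X = {mzero K Z X} \<and> hom K X Z = {mzero K X Z})"

definition is_biprod :: "('o,'m) mdc_struct \<Rightarrow> 'o \<Rightarrow> 'o \<Rightarrow> 'o \<Rightarrow> bool" where
  "is_biprod K X Y S \<longleftrightarrow> X \<in> obj K \<and> Y \<in> obj K \<and> S \<in> obj K \<and>
     (\<exists>i1 \<in> hom K X S. \<exists>i2 \<in> hom K Y S. \<exists>p1 \<in> hom K S X. \<exists>p2 \<in> hom K S Y.
        cmp K p1 i1 = idm K X \<and> cmp K p2 i2 = idm K Y \<and>
        cmp K p1 i2 = mzero K Y X \<and> cmp K p2 i1 = mzero K X Y \<and>
        madd K (cmp K i1 p1) (cmp K i2 p2) = idm K S)"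

definition additive_ax :: "('o,'m) mdc_struct \<Rightarrow> bool" where
  "additive_ax K \<longleftrightarrow> category_ax K \<and> preadditive_ax K \<and>
     (\<exists>Z. zero_obj K Z) \<and>
     (\<forall>X \<in> obj K. \<forall>Y \<in> obj K. \<exists>S. is_biprod K X Y S)"

definition shift_ax :: "('o,'m) mdc_struct \<Rightarrow> bool" where
  "shift_ax K \<longleftrightarrow>
     (\<forall>X \<in> obj K. shO K X \<in> obj K \<and> shM K (idm K X) = idm K (shO K X)) \<and>
     (\<forall>X \<in> obj K. \<forall>Y \<in> obj K. bij_betw (shM K) (hom K X Y) (hom K (shO K X) (shO K Y))) \<and>
     (\<forall>X Y Z f g. f \<in> hom K X Y \<longrightarrow> g \<in> hom K Y Z \<longrightarrow>
        shM K (cmp K g f) = cmp K (shM K g) (shM K f)) \<and>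
     (\<forall>X Y f g. f \<in> hom K X Y \<longrightarrow> g \<in> hom K X Y \<longrightarrow>
        shM K (madd K f g) = madd K (shM K f) (shM K g)) \<and>
     (\<forall>Y \<in> obj K. \<exists>X \<in> obj K. isomorphic K (shO K X) Y)"

definition is_triangle :: "('o,'m) mdc_struct \<Rightarrow> ('o \<times> 'o \<times> 'o \<times> 'm \<times> 'm \<times> 'm) \<Rightarrow> bool" where
  "is_triangle K T \<longleftrightarrow> (case T of (X,Y,Z,f,g,h) \<Rightarrow>
     f \<in> hom K X Y \<and> g \<in> hom K Y Z \<and> h \<in> hom K Z (shO K X))"

definition tri_morph :: "('o,'m) mdc_struct \<Rightarrow> ('o \<times> 'o \<times> 'o \<times> 'm \<times> 'm \<times> 'm)
     \<Rightarrow> ('o \<times> 'o \<times> 'o \<times> 'm \<times> 'm \<times> 'm) \<Rightarrow> 'm \<Rightarrow> 'm \<Rightarrow> 'm \<Rightarrow> bool" where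
  "tri_morph K T T' a b c \<longleftrightarrow> (case T of (X,Y,Z,f,g,h) \<Rightarrow> case T' of (X',Y',Z',f',g',h') \<Rightarrow>
     a \<in> hom K X X' \<and> b \<in> hom K Y Y' \<and> c \<in> hom K Z Z' \<and>
     cmp K b f = cmp K f' a \<and> cmp K c g = cmp K g' b \<and> cmp K (shM K a) h = cmp K h' c)"

definition triangulated_ax :: "('o,'m) mdc_struct \<Rightarrow> bool" where
  "triangulated_ax K \<longleftrightarrow> additive_ax K \<and> shift_ax K \<and>
     (\<forall>T \<in> tri K. is_triangle K T) \<and>
     \<comment> \<open>TR1\<close>
     (\<forall>T T' a b c. T \<in> tri K \<longrightarrow> is_triangle K T' \<longrightarrow> tri_morph K T T' a b c \<longrightarrow>
        (case T of (X,Y,Z,_) \<Rightarrow> case T' of (X',Y',Z',_) \<Rightarrow>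
          is_iso K a X X' \<and> is_iso K b Y Y' \<and> is_iso K c Z Z') \<longrightarrow> T' \<in> tri K) \<and>
     (\<forall>X \<in> obj K. \<forall>Z. zero_obj K Z \<longrightarrow>
        (X, X, Z, idm K X, mzero K X Z, mzero K Z (shO K X)) \<in> tri K) \<and>
     (\<forall>X Y f. f \<in> hom K X Y \<longrightarrow> (\<exists>Z g h. (X,Y,Z,f,g,h) \<in> tri K)) \<and>
     \<comment> \<open>TR2\<close>
     (\<forall>X Y Z f g h. (X,Y,Z,f,g,h) \<in> tri K \<longleftrightarrow>
        (Y, Z, shO K X, g, h, mneg K (shM K f)) \<in> tri K) \<and>
     \<comment> \<open>TR3\<close>
     (\<forall>X Y Z f g h X' Y' Z' f' g' h' a b.
        (X,Y,Z,f,g,h) \<in> tri K \<longrightarrow> (X',Y',Z',f',g',h') \<in> tri K \<longrightarrow>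
        a \<in> hom K X X' \<longrightarrow> b \<in> hom K Y Y' \<longrightarrow> cmp K b f = cmp K f' a \<longrightarrow>
        (\<exists>c. tri_morph K (X,Y,Z,f,g,h) (X',Y',Z',f',g',h') a b c)) \<and>
     \<comment> \<open>TR4 (octahedral axiom)\<close>
     (\<forall>X Y Z f g Q1 p1 d1 Q2 p2 d2 Q3 p3 d3.
        f \<in> hom K X Y \<longrightarrow> g \<in> hom K Y Z \<longrightarrow>
        (X,Y,Q1,f,p1,d1) \<in> tri K \<longrightarrow> (X,Z,Q2,cmp K g f,p2,d2) \<in> tri K \<longrightarrow>
        (Y,Z,Q3,g,p3,d3) \<in> tri K \<longrightarrow>
        (\<exists>a b. (Q1,Q2,Q3,a,b,cmp K (shM K p1) d3) \<in> tri K \<and>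
           cmp K a p1 = cmp K p2 g \<and> cmp K d2 a = d1 \<and>
           cmp K b p2 = p3 \<and> cmp K d3 b = cmp K (shM K f) d2))"

definition monoidal_ax :: "('o,'m) mdc_struct \<Rightarrow> bool" where
  "monoidal_ax K \<longleftrightarrow>
     unitO K \<in> obj K \<and>
     (\<forall>X \<in> obj K. \<forall>Y \<in> obj K. tensO K X Y \<in> obj K) \<and>
     (\<forall>X Y X' Y' f g. f \<in> hom K X Y \<longrightarrow> g \<in> hom K X' Y' \<longrightarrow>
        tensM K f g \<in> hom K (tensO K X X') (tensO K Y Y')) \<and>
     (\<forall>X \<in> obj K. \<forall>Y \<in> obj K. tensM K (idm K X) (idm K Y) = idm K (tensO K X Y)) \<and>
     (\<forall>X Y Z X' Y' Z' f g f' g'. f \<in> hom K X Y \<longrightarrow> g \<in> hom K Y Z \<longrightarrow>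
        f' \<in> hom K X' Y' \<longrightarrow> g' \<in> hom K Y' Z' \<longrightarrow>
        tensM K (cmp K g f) (cmp K g' f') = cmp K (tensM K g g') (tensM K f f')) \<and>
     \<comment> \<open>additive in each variable\<close>
     (\<forall>X Y X' Y' f g h. f \<in> hom K X Y \<longrightarrow> g \<in> hom K X Y \<longrightarrow> h \<in> hom K X' Y' \<longrightarrow>
        tensM K (madd K f g) h = madd K (tensM K f h) (tensM K g h) \<and>
        tensM K h (madd K f g) = madd K (tensM K h f) (tensM K h g)) \<and>
     \<comment> \<open>associator and unitors: natural isomorphisms\<close>
     (\<forall>X \<in> obj K. \<forall>Y \<in> obj K. \<forall>Z \<in> obj K.
        is_iso K (assoc K X Y Z) (tensO K (tensO K X Y) Z) (tensO K X (tensO K Y Z))) \<and>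
     (\<forall>X \<in> obj K. is_iso K (lunit K X) (tensO K (unitO K) X) X \<and>
                   is_iso K (runit K X) (tensO K X (unitO K)) X) \<and>
     (\<forall>X Y Z X' Y' Z' f g h. f \<in> hom K X X' \<longrightarrow> g \<in> hom K Y Y' \<longrightarrow> h \<in> hom K Z Z' \<longrightarrow>
        cmp K (assoc K X' Y' Z') (tensM K (tensM K f g) h) =
        cmp K (tensM K f (tensM K g h)) (assoc K X Y Z)) \<and>
     (\<forall>X Y f. f \<in> hom K X Y \<longrightarrow>
        cmp K (lunit K Y) (tensM K (idm K (unitO K)) f) = cmp K f (lunit K X) \<and>
        cmp K (runit K Y) (tensM K f (idm K (unitO K))) = cmp K f (runit K X)) \<and>
     \<comment> \<open>pentagon and triangle identities\<close>
     (\<forall>W \<in> obj K. \<forall>X \<in> obj K. \<forall>Y \<in> obj K. \<forall>Z \<in> obj K.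
        cmp K (assoc K W X (tensO K Y Z)) (assoc K (tensO K W X) Y Z) =
        cmp K (tensM K (idm K W) (assoc K X Y Z))
          (cmp K (assoc K W (tensO K X Y) Z) (tensM K (assoc K W X Y) (idm K Z)))) \<and>
     (\<forall>X \<in> obj K. \<forall>Y \<in> obj K.
        cmp K (tensM K (idm K X) (lunit K Y)) (assoc K X (unitO K) Y) =
        tensM K (runit K X) (idm K Y))"

definition tensor_exact_ax :: "('o,'m) mdc_struct \<Rightarrow> bool" where
  "tensor_exact_ax K \<longleftrightarrow>
     (\<forall>W \<in> obj K. \<forall>X \<in> obj K.
        is_iso K (sigL K X W) (tensO K (shO K X) W) (shO K (tensO K X W)) \<and>
        is_iso K (sigR K W X) (tensO K W (shO K X)) (shO K (tensO K W X))) \<and>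
     (\<forall>W \<in> obj K. \<forall>X Y f. f \<in> hom K X Y \<longrightarrow>
        cmp K (sigL K Y W) (tensM K (shM K f) (idm K W)) =
          cmp K (shM K (tensM K f (idm K W))) (sigL K X W) \<and>
        cmp K (sigR K W Y) (tensM K (idm K W) (shM K f)) =
          cmp K (shM K (tensM K (idm K W) f)) (sigR K W X)) \<and>
     (\<forall>W \<in> obj K. \<forall>X Y Z f g h. (X,Y,Z,f,g,h) \<in> tri K \<longrightarrow>
        (tensO K X W, tensO K Y W, tensO K Z W, tensM K f (idm K W), tensM K g (idm K W),
           cmp K (sigL K X W) (tensM K h (idm K W))) \<in> tri K \<and>
        (tensO K W X, tensO K W Y, tensO K W Z, tensM K (idm K W) f, tensM K (idm K W) g,
           cmp K (sigR K W X) (tensM K (idm K W) h)) \<in> tri K)"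

definition mdc :: "('o,'m) mdc_struct \<Rightarrow> bool" where
  "mdc K \<longleftrightarrow> triangulated_ax K \<and> monoidal_ax K \<and> tensor_exact_ax K"

text \<open>Thick subcategories (full, replete, triangulated, closed under direct summands)
  are identified with their sets of objects.\<close>
definition thick :: "('o,'m) mdc_struct \<Rightarrow> 'o set \<Rightarrow> bool" where
  "thick K C \<longleftrightarrow> C \<subseteq> obj K \<and>
     (\<forall>Z. zero_obj K Z \<longrightarrow> Z \<in> C) \<and>
     (\<forall>X Y. X \<in> C \<longrightarrow> isomorphic K X Y \<longrightarrow> Y \<in> C) \<and>
     (\<forall>X \<in> obj K. shO K X \<in> C \<longleftrightarrow> X \<in> C) \<and>
     (\<forall>X Y Z f g h. (X,Y,Z,f,g,h) \<in> tri K \<longrightarrow>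
        (X \<in> C \<longrightarrow> Y \<in> C \<longrightarrow> Z \<in> C) \<and> (Y \<in> C \<longrightarrow> Z \<in> C \<longrightarrow> X \<in> C) \<and>
        (X \<in> C \<longrightarrow> Z \<in> C \<longrightarrow> Y \<in> C)) \<and>
     (\<forall>X Y S. is_biprod K X Y S \<longrightarrow> S \<in> C \<longrightarrow> X \<in> C)"

definition thick_ideal :: "('o,'m) mdc_struct \<Rightarrow> 'o set \<Rightarrow> bool" where
  "thick_ideal K I \<longleftrightarrow> thick K I \<and>
     (\<forall>X \<in> I. \<forall>Y \<in> obj K. tensO K X Y \<in> I \<and> tensO K Y X \<in> I)"

definition prime_ideal :: "('o,'m) mdc_struct \<Rightarrow> 'o set \<Rightarrow> bool" where
  "prime_ideal K P \<longleftrightarrow> thick_ideal K P \<and> P \<noteq> obj K \<and>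
     (\<forall>I J. thick_ideal K I \<longrightarrow> thick_ideal K J \<longrightarrow>
        (\<forall>X \<in> I. \<forall>Y \<in> J. tensO K X Y \<in> P) \<longrightarrow> I \<subseteq> P \<or> J \<subseteq> P)"

definition Spc :: "('o,'m) mdc_struct \<Rightarrow> 'o set set" where
  "Spc K = {P. prime_ideal K P}"

definition Vobj :: "('o,'m) mdc_struct \<Rightarrow> 'o \<Rightarrow> 'o set set" where
  "Vobj K A = {P \<in> Spc K. A \<notin> P}"

definition Vset :: "('o,'m) mdc_struct \<Rightarrow> 'o set \<Rightarrow> 'o set set" where
  "Vset K S = {P \<in> Spc K. \<forall>A \<in> S. A \<notin> P}"

definition thick_generated_by :: "('o,'m) mdc_struct \<Rightarrow> 'o \<Rightarrow> bool" where
  "thick_generated_by K G \<longleftrightarrow> G \<in> obj K \<and> (\<forall>C. thick K C \<longrightarrow> G \<in> C \<longrightarrow> C = obj K)"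

end

theory Submission imports Defs begin

locale mdcl = fixes K :: "('o,'m) mdc_struct" assumes M: "mdc K"
begin

lemma ax0: "triangulated_ax K" "monoidal_ax K" "tensor_exact_ax K"
  using M unfolding mdc_def by blast+
lemma ax1: "additive_ax K" "shift_ax K" using ax0(1) unfolding triangulated_ax_def by blast+
lemma ax: "category_ax K" "preadditive_ax K" "\<exists>Z. zero_obj K Z" "shift_ax K"
  "triangulated_ax K" "monoidal_ax K" "tensor_exact_ax K"
  using ax0 ax1 unfolding additive_ax_def by blast+

lemma hom_obj: "f \<in> hom K X Y \<Longrightarrow> X \<in> obj K \<and> Y \<in> obj K"
  using ax(1) unfolding category_ax_def by blast
lemma id_hom: "X \<in> obj K \<Longrightarrow> idm K X \<in> hom K X X"
  using ax(1) unfolding category_ax_def by blast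
lemma cmp_hom: "f \<in> hom K X Y \<Longrightarrow> g \<in> hom K Y Z \<Longrightarrow> cmp K g f \<in> hom K X Z"
  using ax(1) unfolding category_ax_def by blast
lemma cmp_id: "f \<in> hom K X Y \<Longrightarrow> cmp K f (idm K X) = f"
   "f \<in> hom K X Y \<Longrightarrow> cmp K (idm K Y) f = f"
  using ax(1) unfolding category_ax_def by blast+
lemma cmp_assoc: "f \<in> hom K W X \<Longrightarrow> g \<in> hom K X Y \<Longrightarrow> h \<in> hom K Y Z \<Longrightarrow>
        cmp K h (cmp K g f) = cmp K (cmp K h g) f"
  using ax(1) unfolding category_ax_def by blast

lemma cmp_addL: "f \<in> hom K X Y \<Longrightarrow> g \<in> hom K X Y \<Longrightarrow> h \<in> hom K Y Z \<Longrightarrow>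
        cmp K h (madd K f g) = madd K (cmp K h f) (cmp K h g)"
  using ax(2) unfolding preadditive_ax_def by blast
lemma cmp_addR: "f \<in> hom K X Y \<Longrightarrow> g \<in> hom K Y Z \<Longrightarrow> h \<in> hom K Y Z \<Longrightarrow>
        cmp K (madd K g h) f = madd K (cmp K g f) (cmp K h f)"
  using ax(2) unfolding preadditive_ax_def by blast

lemma mon1: "unitO K \<in> obj K"
  using ax(6) unfolding monoidal_ax_def by (elim conjE) assumption
lemma mon2: "(\<forall>X \<in> obj K. \<forall>Y \<in> obj K. tensO K X Y \<in> obj K)"
  using ax(6) unfolding monoidal_ax_def by (elim conjE) assumption
lemma mon3: "(\<forall>X Y X' Y' f g. f \<in> hom K X Y \<longrightarrow> g \<in> hom K X' Y' \<longrightarrow>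
        tensM K f g \<in> hom K (tensO K X X') (tensO K Y Y'))"
  using ax(6) unfolding monoidal_ax_def by (elim conjE) assumption
lemma mon4: "(\<forall>X \<in> obj K. \<forall>Y \<in> obj K. tensM K (idm K X) (idm K Y) = idm K (tensO K X Y))"
  using ax(6) unfolding monoidal_ax_def by (elim conjE) assumption
lemma mon5: "(\<forall>X Y Z X' Y' Z' f g f' g'. f \<in> hom K X Y \<longrightarrow> g \<in> hom K Y Z \<longrightarrow>
        f' \<in> hom K X' Y' \<longrightarrow> g' \<in> hom K Y' Z' \<longrightarrow>
        tensM K (cmp K g f) (cmp K g' f') = cmp K (tensM K g g') (tensM K f f'))"
  using ax(6) unfolding monoidal_ax_def by (elim conjE) assumption
lemma mon6: "(\<forall>X Y X' Y' f g h. f \<in> hom K X Y \<longrightarrow> g \<in> hom K X Y \<longrightarrow> h \<in> hom K X' Y' \<longrightarrow>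
        tensM K (madd K f g) h = madd K (tensM K f h) (tensM K g h) \<and>
        tensM K h (madd K f g) = madd K (tensM K h f) (tensM K h g))"
  using ax(6) unfolding monoidal_ax_def by (elim conjE) assumption
lemma mon7: "(\<forall>X \<in> obj K. \<forall>Y \<in> obj K. \<forall>Z \<in> obj K.
        is_iso K (assoc K X Y Z) (tensO K (tensO K X Y) Z) (tensO K X (tensO K Y Z)))"
  using ax(6) unfolding monoidal_ax_def by (elim conjE) assumption
lemma mon8: "(\<forall>X \<in> obj K. is_iso K (lunit K X) (tensO K (unitO K) X) X \<and>
                   is_iso K (runit K X) (tensO K X (unitO K)) X)"
  using ax(6) unfolding monoidal_ax_def by (elim conjE) assumption
lemma unit_obj: "unitO K \<in> obj K" using mon1 .
lemma tens_obj: "X \<in> obj K \<Longrightarrow> Y \<in> obj K \<Longrightarrow> tensO K X Y \<in> obj K"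
  using mon2 by blast
lemma tens_hom: "f \<in> hom K X Y \<Longrightarrow> g \<in> hom K X' Y' \<Longrightarrow>
        tensM K f g \<in> hom K (tensO K X X') (tensO K Y Y')"
  using mon3 by blast
lemma tens_id: "X \<in> obj K \<Longrightarrow> Y \<in> obj K \<Longrightarrow> tensM K (idm K X) (idm K Y) = idm K (tensO K X Y)"
  using mon4 by blast
lemma tens_cmp: "f \<in> hom K X Y \<Longrightarrow> g \<in> hom K Y Z \<Longrightarrow>
        f' \<in> hom K X' Y' \<Longrightarrow> g' \<in> hom K Y' Z' \<Longrightarrow>
        tensM K (cmp K g f) (cmp K g' f') = cmp K (tensM K g g') (tensM K f f')"
  using mon5 by blast
lemma tens_add: "f \<in> hom K X Y \<Longrightarrow> g \<in> hom K X Y \<Longrightarrow> h \<in> hom K X' Y' \<Longrightarrow>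
        tensM K (madd K f g) h = madd K (tensM K f h) (tensM K g h) \<and>
        tensM K h (madd K f g) = madd K (tensM K h f) (tensM K h g)"
  using mon6 by blast
lemma assoc_iso: "X \<in> obj K \<Longrightarrow> Y \<in> obj K \<Longrightarrow> Z \<in> obj K \<Longrightarrow>
        is_iso K (assoc K X Y Z) (tensO K (tensO K X Y) Z) (tensO K X (tensO K Y Z))"
  using mon7 by blast
lemma unit_iso: "X \<in> obj K \<Longrightarrow> is_iso K (lunit K X) (tensO K (unitO K) X) X"
   "X \<in> obj K \<Longrightarrow> is_iso K (runit K X) (tensO K X (unitO K)) X"
  using mon8 by blast+

lemma sig_iso: "W \<in> obj K \<Longrightarrow> X \<in> obj K \<Longrightarrow>
        is_iso K (sigL K X W) (tensO K (shO K X) W) (shO K (tensO K X W)) \<and>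
        is_iso K (sigR K W X) (tensO K W (shO K X)) (shO K (tensO K W X))"
  using ax(7) unfolding tensor_exact_ax_def by blast
lemma tens_tri: "W \<in> obj K \<Longrightarrow> (X,Y,Z,f,g,h) \<in> tri K \<Longrightarrow>
        (tensO K X W, tensO K Y W, tensO K Z W, tensM K f (idm K W), tensM K g (idm K W),
           cmp K (sigL K X W) (tensM K h (idm K W))) \<in> tri K \<and>
        (tensO K W X, tensO K W Y, tensO K W Z, tensM K (idm K W) f, tensM K (idm K W) g,
           cmp K (sigR K W X) (tensM K (idm K W) h)) \<in> tri K"
  using ax(7) unfolding tensor_exact_ax_def by blast
lemma sh_obj: "X \<in> obj K \<Longrightarrow> shO K X \<in> obj K"
  using ax(4) unfolding shift_ax_def by blast
lemma pa0: "(\<forall>X \<in> obj K. \<forall>Y \<in> obj K.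
        mzero K X Y \<in> hom K X Y \<and>
        (\<forall>f \<in> hom K X Y. \<forall>g \<in> hom K X Y. madd K f g \<in> hom K X Y) \<and>
        (\<forall>f \<in> hom K X Y. mneg K f \<in> hom K X Y) \<and>
        (\<forall>f \<in> hom K X Y. \<forall>g \<in> hom K X Y. \<forall>h \<in> hom K X Y.
            madd K (madd K f g) h = madd K f (madd K g h)) \<and>
        (\<forall>f \<in> hom K X Y. \<forall>g \<in> hom K X Y. madd K f g = madd K g f) \<and>
        (\<forall>f \<in> hom K X Y. madd K f (mzero K X Y) = f) \<and>
        (\<forall>f \<in> hom K X Y. madd K f (mneg K f) = mzero K X Y))"
  using ax(2) unfolding preadditive_ax_def by (elim conjE) assumption
lemma pa: "X \<in> obj K \<Longrightarrow> Y \<in> obj K \<Longrightarrow>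
        mzero K X Y \<in> hom K X Y \<and>
        (\<forall>f \<in> hom K X Y. \<forall>g \<in> hom K X Y. madd K f g \<in> hom K X Y) \<and>
        (\<forall>f \<in> hom K X Y. mneg K f \<in> hom K X Y) \<and>
        (\<forall>f \<in> hom K X Y. \<forall>g \<in> hom K X Y. \<forall>h \<in> hom K X Y.
            madd K (madd K f g) h = madd K f (madd K g h)) \<and>
        (\<forall>f \<in> hom K X Y. \<forall>g \<in> hom K X Y. madd K f g = madd K g f) \<and>
        (\<forall>f \<in> hom K X Y. madd K f (mzero K X Y) = f) \<and>
        (\<forall>f \<in> hom K X Y. madd K f (mneg K f) = mzero K X Y)"
  using pa0 by blast
lemma zero_hom: "X \<in> obj K \<Longrightarrow> Y \<in> obj K \<Longrightarrow> mzero K X Y \<in> hom K X Y"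
  using pa by blast
lemma add_hom: "f \<in> hom K X Y \<Longrightarrow> g \<in> hom K X Y \<Longrightarrow> madd K f g \<in> hom K X Y"
  using pa[of X Y] hom_obj[of f X Y] by blast
lemma neg_hom: "f \<in> hom K X Y \<Longrightarrow> mneg K f \<in> hom K X Y"
  using pa[of X Y] hom_obj[of f X Y] by blast
lemma add_assoc: "f \<in> hom K X Y \<Longrightarrow> g \<in> hom K X Y \<Longrightarrow> h \<in> hom K X Y \<Longrightarrow>
   madd K (madd K f g) h = madd K f (madd K g h)"
  using pa[of X Y] hom_obj[of f X Y] by blast
lemma add_comm: "f \<in> hom K X Y \<Longrightarrow> g \<in> hom K X Y \<Longrightarrow> madd K f g = madd K g f"
  using pa[of X Y] hom_obj[of f X Y] by blast
lemma add_zero: "f \<in> hom K X Y \<Longrightarrow> madd K f (mzero K X Y) = f"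
  using pa[of X Y] hom_obj[of f X Y] by blast
lemma add_neg: "f \<in> hom K X Y \<Longrightarrow> madd K f (mneg K f) = mzero K X Y"
  using pa[of X Y] hom_obj[of f X Y] by blast
lemma tri_obj: "(X,Y,Z,f,g,h) \<in> tri K \<Longrightarrow> X \<in> obj K \<and> Y \<in> obj K \<and> Z \<in> obj K"
proof -
  assume a: "(X,Y,Z,f,g,h) \<in> tri K"
  have "\<forall>T \<in> tri K. is_triangle K T" using ax(5) unfolding triangulated_ax_def by (elim conjE) assumption
  then have "f \<in> hom K X Y \<and> g \<in> hom K Y Z" using a unfolding is_triangle_def by fastforce
  then show ?thesis using hom_obj by blast
qed

lemma iso_obj: "isomorphic K X Y \<Longrightarrow> X \<in> obj K \<and> Y \<in> obj K"
  unfolding isomorphic_def is_iso_def using hom_obj by blast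
lemma iso_refl: "X \<in> obj K \<Longrightarrow> isomorphic K X X"
  unfolding isomorphic_def is_iso_def using id_hom cmp_id by blast
lemma iso_sym: "isomorphic K X Y \<Longrightarrow> isomorphic K Y X"
  unfolding isomorphic_def is_iso_def by blast
lemma iso_trans: "isomorphic K X Y \<Longrightarrow> isomorphic K Y Z \<Longrightarrow> isomorphic K X Z"
proof -
  assume "isomorphic K X Y" "isomorphic K Y Z"
  then obtain f g f' g' where f: "f \<in> hom K X Y" "g \<in> hom K Y X" "cmp K g f = idm K X" "cmp K f g = idm K Y"
    and f': "f' \<in> hom K Y Z" "g' \<in> hom K Z Y" "cmp K g' f' = idm K Y" "cmp K f' g' = idm K Z"
    unfolding isomorphic_def is_iso_def by blast
  have "cmp K (cmp K g g') (cmp K f' f) = cmp K g (cmp K g' (cmp K f' f))"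
    using f f' cmp_hom cmp_assoc by metis
  also have "cmp K g' (cmp K f' f) = cmp K (cmp K g' f') f" using f f' cmp_assoc by metis
  also have "\<dots> = f" using f f' cmp_id by simp
  finally have 1: "cmp K (cmp K g g') (cmp K f' f) = idm K X" using f by simp
  have "cmp K (cmp K f' f) (cmp K g g') = cmp K f' (cmp K f (cmp K g g'))"
    using f f' cmp_hom cmp_assoc by metis
  also have "cmp K f (cmp K g g') = cmp K (cmp K f g) g'" using f f' cmp_assoc by metis
  also have "\<dots> = g'" using f f' cmp_id by simp
  finally have 2: "cmp K (cmp K f' f) (cmp K g g') = idm K Z" using f' by simp
  show ?thesis unfolding isomorphic_def is_iso_def using 1 2 f f' cmp_hom by blast
qed
lemma is_iso_isomorphic: "is_iso K f X Y \<Longrightarrow> isomorphic K X Y"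
  unfolding isomorphic_def by blast

lemma iso_tensL: "isomorphic K X X' \<Longrightarrow> W \<in> obj K \<Longrightarrow> isomorphic K (tensO K X W) (tensO K X' W)"
proof -
  assume a: "isomorphic K X X'" and W: "W \<in> obj K"
  then obtain f g where f: "f \<in> hom K X X'" "g \<in> hom K X' X" "cmp K g f = idm K X" "cmp K f g = idm K X'"
    unfolding isomorphic_def is_iso_def by blast
  have X: "X \<in> obj K" "X' \<in> obj K" using f hom_obj by blast+
  have i: "idm K W \<in> hom K W W" using id_hom W by blast
  have "cmp K (tensM K g (idm K W)) (tensM K f (idm K W)) = idm K (tensO K X W)"
    using tens_cmp[OF f(1) f(2) i i] f cmp_id[OF i] tens_id X W by simp
  moreover have "cmp K (tensM K f (idm K W)) (tensM K g (idm K W)) = idm K (tensO K X' W)"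
    using tens_cmp[OF f(2) f(1) i i] f cmp_id[OF i] tens_id X W by simp
  ultimately show ?thesis unfolding isomorphic_def is_iso_def
    using tens_hom[OF f(1) i] tens_hom[OF f(2) i] by blast
qed

lemma iso_tensR: "isomorphic K X X' \<Longrightarrow> W \<in> obj K \<Longrightarrow> isomorphic K (tensO K W X) (tensO K W X')"
proof -
  assume a: "isomorphic K X X'" and W: "W \<in> obj K"
  then obtain f g where f: "f \<in> hom K X X'" "g \<in> hom K X' X" "cmp K g f = idm K X" "cmp K f g = idm K X'"
    unfolding isomorphic_def is_iso_def by blast
  have X: "X \<in> obj K" "X' \<in> obj K" using f hom_obj by blast+
  have i: "idm K W \<in> hom K W W" using id_hom W by blast
  have "cmp K (tensM K (idm K W) g) (tensM K (idm K W) f) = idm K (tensO K W X)"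
    using tens_cmp[OF i i f(1) f(2)] f cmp_id[OF i] tens_id X W by simp
  moreover have "cmp K (tensM K (idm K W) f) (tensM K (idm K W) g) = idm K (tensO K W X')"
    using tens_cmp[OF i i f(2) f(1)] f cmp_id[OF i] tens_id X W by simp
  ultimately show ?thesis unfolding isomorphic_def is_iso_def
    using tens_hom[OF i f(1)] tens_hom[OF i f(2)] by blast
qed


lemma idem_zero: assumes x: "x \<in> hom K X Y" and e: "madd K x x = x" shows "x = mzero K X Y"
proof -
  have n: "mneg K x \<in> hom K X Y" using neg_hom x by blast
  have "x = madd K x (mzero K X Y)" using add_zero x by simp
  also have "\<dots> = madd K x (madd K x (mneg K x))" using add_neg x by simp
  also have "\<dots> = madd K (madd K x x) (mneg K x)" using add_assoc x n by simp
  also have "\<dots> = mzero K X Y" using e add_neg x by simp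
  finally show ?thesis .
qed

lemma zz: "X \<in> obj K \<Longrightarrow> Y \<in> obj K \<Longrightarrow> madd K (mzero K X Y) (mzero K X Y) = mzero K X Y"
  using add_zero zero_hom by blast

lemma cmp_zero_r: assumes h: "h \<in> hom K Y Z" and X: "X \<in> obj K"
  shows "cmp K h (mzero K X Y) = mzero K X Z"
proof -
  have Y: "Y \<in> obj K" using hom_obj h by blast
  have z: "mzero K X Y \<in> hom K X Y" using zero_hom X Y by blast
  have "cmp K h (mzero K X Y) = cmp K h (madd K (mzero K X Y) (mzero K X Y))" using zz X Y by simp
  also have "\<dots> = madd K (cmp K h (mzero K X Y)) (cmp K h (mzero K X Y))" using cmp_addL z h by blast
  finally show ?thesis using idem_zero cmp_hom z h by metis
qed

lemma cmp_zero_l: assumes f: "f \<in> hom K X Y" and Z: "Z \<in> obj K"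
  shows "cmp K (mzero K Y Z) f = mzero K X Z"
proof -
  have Y: "Y \<in> obj K" using hom_obj f by blast
  have z: "mzero K Y Z \<in> hom K Y Z" using zero_hom Z Y by blast
  have "cmp K (mzero K Y Z) f = cmp K (madd K (mzero K Y Z) (mzero K Y Z)) f" using zz Z Y by simp
  also have "\<dots> = madd K (cmp K (mzero K Y Z) f) (cmp K (mzero K Y Z) f)" using cmp_addR z f by blast
  finally show ?thesis using idem_zero cmp_hom z f by metis
qed

lemma tens_zero_l: assumes X: "X \<in> obj K" and Y: "Y \<in> obj K" and h: "h \<in> hom K X' Y'"
  shows "tensM K (mzero K X Y) h = mzero K (tensO K X X') (tensO K Y Y')"
proof -
  have z: "mzero K X Y \<in> hom K X Y" using zero_hom X Y by blast
  have "tensM K (mzero K X Y) h = tensM K (madd K (mzero K X Y) (mzero K X Y)) h" using zz X Y by simp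
  also have "\<dots> = madd K (tensM K (mzero K X Y) h) (tensM K (mzero K X Y) h)" using tens_add z h by blast
  finally show ?thesis using idem_zero tens_hom z h by metis
qed

lemma tens_zero_r: assumes X: "X \<in> obj K" and Y: "Y \<in> obj K" and h: "h \<in> hom K X' Y'"
  shows "tensM K h (mzero K X Y) = mzero K (tensO K X' X) (tensO K Y' Y)"
proof -
  have z: "mzero K X Y \<in> hom K X Y" using zero_hom X Y by blast
  have "tensM K h (mzero K X Y) = tensM K h (madd K (mzero K X Y) (mzero K X Y))" using zz X Y by simp
  also have "\<dots> = madd K (tensM K h (mzero K X Y)) (tensM K h (mzero K X Y))" using tens_add z h by blast
  finally show ?thesis using idem_zero tens_hom z h by metis
qed

lemma zero_objI: assumes Z: "Z \<in> obj K" and e: "idm K Z = mzero K Z Z" shows "zero_obj K Z"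
  unfolding zero_obj_def
proof (intro conjI ballI Z)
  fix X assume X: "X \<in> obj K"
  show "hom K Z X = {mzero K Z X}"
  proof
    show "hom K Z X \<subseteq> {mzero K Z X}"
    proof
      fix f assume f: "f \<in> hom K Z X"
      have "f = cmp K f (idm K Z)" using cmp_id f by simp
      also have "\<dots> = mzero K Z X" using e cmp_zero_r f Z by simp
      finally show "f \<in> {mzero K Z X}" by simp
    qed
    show "{mzero K Z X} \<subseteq> hom K Z X" using zero_hom X Z by blast
  qed
  show "hom K X Z = {mzero K X Z}"
  proof
    show "hom K X Z \<subseteq> {mzero K X Z}"
    proof
      fix f assume f: "f \<in> hom K X Z"
      have "f = cmp K (idm K Z) f" using cmp_id f by simp
      also have "\<dots> = mzero K X Z" using e cmp_zero_l f Z by simp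
      finally show "f \<in> {mzero K X Z}" by simp
    qed
    show "{mzero K X Z} \<subseteq> hom K X Z" using zero_hom X Z by blast
  qed
qed

lemma zero_obj_id: "zero_obj K Z \<Longrightarrow> Z \<in> obj K \<and> idm K Z = mzero K Z Z"
  unfolding zero_obj_def using id_hom by blast

lemma zero_tens: assumes Z: "zero_obj K Z" and W: "W \<in> obj K"
  shows "zero_obj K (tensO K Z W) \<and> zero_obj K (tensO K W Z)"
proof -
  have Z1: "Z \<in> obj K" "idm K Z = mzero K Z Z" using zero_obj_id Z by blast+
  have i: "idm K W \<in> hom K W W" using id_hom W by blast
  have "idm K (tensO K Z W) = mzero K (tensO K Z W) (tensO K Z W)"
    using tens_id[OF Z1(1) W] tens_zero_l[OF Z1(1) Z1(1) i] Z1(2) by simp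
  moreover have "idm K (tensO K W Z) = mzero K (tensO K W Z) (tensO K W Z)"
    using tens_id[OF W Z1(1)] tens_zero_r[OF Z1(1) Z1(1) i] Z1(2) by simp
  ultimately show ?thesis using zero_objI tens_obj Z1 W by blast
qed

lemma tcL: "f \<in> hom K A B \<Longrightarrow> g \<in> hom K B C \<Longrightarrow> W \<in> obj K \<Longrightarrow>
  cmp K (tensM K g (idm K W)) (tensM K f (idm K W)) = tensM K (cmp K g f) (idm K W)"
  using tens_cmp[of f A B g C "idm K W" W W "idm K W" W] id_hom cmp_id by metis
lemma tcR: "f \<in> hom K A B \<Longrightarrow> g \<in> hom K B C \<Longrightarrow> W \<in> obj K \<Longrightarrow>
  cmp K (tensM K (idm K W) g) (tensM K (idm K W) f) = tensM K (idm K W) (cmp K g f)"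
  using tens_cmp[of "idm K W" W W "idm K W" W f A B g C] id_hom cmp_id by metis

lemma biprod_tens: assumes b: "is_biprod K X Y S" and W: "W \<in> obj K"
  shows "is_biprod K (tensO K X W) (tensO K Y W) (tensO K S W) \<and>
         is_biprod K (tensO K W X) (tensO K W Y) (tensO K W S)"
proof -
  obtain i1 i2 p1 p2 where o: "X \<in> obj K" "Y \<in> obj K" "S \<in> obj K"
    "i1 \<in> hom K X S" "i2 \<in> hom K Y S" "p1 \<in> hom K S X" "p2 \<in> hom K S Y"
    "cmp K p1 i1 = idm K X" "cmp K p2 i2 = idm K Y"
    "cmp K p1 i2 = mzero K Y X" "cmp K p2 i1 = mzero K X Y"
    "madd K (cmp K i1 p1) (cmp K i2 p2) = idm K S"
    using b unfolding is_biprod_def by blast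
  have i: "idm K W \<in> hom K W W" using id_hom W by blast
  have c1: "cmp K i1 p1 \<in> hom K S S" "cmp K i2 p2 \<in> hom K S S" using cmp_hom o by blast+
  have L: "is_biprod K (tensO K X W) (tensO K Y W) (tensO K S W)"
    unfolding is_biprod_def
  proof (intro conjI tens_obj o W bexI)
    show "cmp K (tensM K p1 (idm K W)) (tensM K i1 (idm K W)) = idm K (tensO K X W)"
      using tcL[OF o(4) o(6) W] o tens_id W by simp
    show "cmp K (tensM K p2 (idm K W)) (tensM K i2 (idm K W)) = idm K (tensO K Y W)"
      using tcL[OF o(5) o(7) W] o tens_id W by simp
    show "cmp K (tensM K p1 (idm K W)) (tensM K i2 (idm K W)) = mzero K (tensO K Y W) (tensO K X W)"
      using tcL[OF o(5) o(6) W] o tens_zero_l i by simp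
    show "cmp K (tensM K p2 (idm K W)) (tensM K i1 (idm K W)) = mzero K (tensO K X W) (tensO K Y W)"
      using tcL[OF o(4) o(7) W] o tens_zero_l i by simp
    show "madd K (cmp K (tensM K i1 (idm K W)) (tensM K p1 (idm K W)))
       (cmp K (tensM K i2 (idm K W)) (tensM K p2 (idm K W))) = idm K (tensO K S W)"
      using tcL[OF o(6) o(4) W] tcL[OF o(7) o(5) W] tens_add[OF c1 i] o tens_id W by simp
  qed (use tens_hom o i in blast)+
  have R: "is_biprod K (tensO K W X) (tensO K W Y) (tensO K W S)"
    unfolding is_biprod_def
  proof (intro conjI tens_obj o W bexI)
    show "cmp K (tensM K (idm K W) p1) (tensM K (idm K W) i1) = idm K (tensO K W X)"
      using tcR[OF o(4) o(6) W] o tens_id W by simp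
    show "cmp K (tensM K (idm K W) p2) (tensM K (idm K W) i2) = idm K (tensO K W Y)"
      using tcR[OF o(5) o(7) W] o tens_id W by simp
    show "cmp K (tensM K (idm K W) p1) (tensM K (idm K W) i2) = mzero K (tensO K W Y) (tensO K W X)"
      using tcR[OF o(5) o(6) W] o tens_zero_r i by simp
    show "cmp K (tensM K (idm K W) p2) (tensM K (idm K W) i1) = mzero K (tensO K W X) (tensO K W Y)"
      using tcR[OF o(4) o(7) W] o tens_zero_r i by simp
    show "madd K (cmp K (tensM K (idm K W) i1) (tensM K (idm K W) p1))
       (cmp K (tensM K (idm K W) i2) (tensM K (idm K W) p2)) = idm K (tensO K W S)"
      using tcR[OF o(6) o(4) W] tcR[OF o(7) o(5) W] tens_add[OF c1 i] o tens_id W by simp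
  qed (use tens_hom o i in blast)+
  show ?thesis using L R by blast
qed


lemma thickD: assumes "thick K P" shows
  "P \<subseteq> obj K"
  "\<And>Z. zero_obj K Z \<Longrightarrow> Z \<in> P"
  "\<And>X Y. X \<in> P \<Longrightarrow> isomorphic K X Y \<Longrightarrow> Y \<in> P"
  "\<And>X. X \<in> obj K \<Longrightarrow> shO K X \<in> P \<longleftrightarrow> X \<in> P"
  "\<And>X Y Z f g h. (X,Y,Z,f,g,h) \<in> tri K \<Longrightarrow>
        (X \<in> P \<longrightarrow> Y \<in> P \<longrightarrow> Z \<in> P) \<and> (Y \<in> P \<longrightarrow> Z \<in> P \<longrightarrow> X \<in> P) \<and>
        (X \<in> P \<longrightarrow> Z \<in> P \<longrightarrow> Y \<in> P)"
  "\<And>X Y S. is_biprod K X Y S \<Longrightarrow> S \<in> P \<Longrightarrow> X \<in> P"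
  using assms unfolding thick_def by (elim conjE; metis)+

lemma thickI:
  assumes "P \<subseteq> obj K" "\<And>Z. zero_obj K Z \<Longrightarrow> Z \<in> P"
  "\<And>X Y. X \<in> P \<Longrightarrow> isomorphic K X Y \<Longrightarrow> Y \<in> P"
  "\<And>X. X \<in> obj K \<Longrightarrow> shO K X \<in> P \<longleftrightarrow> X \<in> P"
  "\<And>X Y Z f g h. (X,Y,Z,f,g,h) \<in> tri K \<Longrightarrow> X \<in> P \<Longrightarrow> Y \<in> P \<Longrightarrow> Z \<in> P"
  "\<And>X Y Z f g h. (X,Y,Z,f,g,h) \<in> tri K \<Longrightarrow> Y \<in> P \<Longrightarrow> Z \<in> P \<Longrightarrow> X \<in> P"
  "\<And>X Y Z f g h. (X,Y,Z,f,g,h) \<in> tri K \<Longrightarrow> X \<in> P \<Longrightarrow> Z \<in> P \<Longrightarrow> Y \<in> P"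
  "\<And>X Y S. is_biprod K X Y S \<Longrightarrow> S \<in> P \<Longrightarrow> X \<in> P"
  shows "thick K P"
  unfolding thick_def
  apply (intro conjI allI impI ballI)
  apply (rule assms(1)) apply (erule assms(2)) apply (erule (1) assms(3)) apply (erule assms(4))
  apply (erule (2) assms(5)) apply (erule (2) assms(6)) apply (erule (2) assms(7)) apply (erule (1) assms(8))
  done

lemma thick_obj: "thick K (obj K)"
proof (rule thickI)
  show "\<And>X Y S. is_biprod K X Y S \<Longrightarrow> S \<in> obj K \<Longrightarrow> X \<in> obj K" unfolding is_biprod_def by blast
  show "\<And>Z. zero_obj K Z \<Longrightarrow> Z \<in> obj K" using zero_obj_id by blast
  show "\<And>X Y. X \<in> obj K \<Longrightarrow> isomorphic K X Y \<Longrightarrow> Y \<in> obj K" using iso_obj by blast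
  show "\<And>X. X \<in> obj K \<Longrightarrow> (shO K X \<in> obj K) = (X \<in> obj K)" using sh_obj by simp
  show "\<And>X Y Z f g h. (X, Y, Z, f, g, h) \<in> tri K \<Longrightarrow> X \<in> obj K \<Longrightarrow> Y \<in> obj K \<Longrightarrow> Z \<in> obj K"
    using tri_obj by blast
  show "\<And>X Y Z f g h. (X, Y, Z, f, g, h) \<in> tri K \<Longrightarrow> Y \<in> obj K \<Longrightarrow> Z \<in> obj K \<Longrightarrow> X \<in> obj K"
    using tri_obj by blast
  show "\<And>X Y Z f g h. (X, Y, Z, f, g, h) \<in> tri K \<Longrightarrow> X \<in> obj K \<Longrightarrow> Z \<in> obj K \<Longrightarrow> Y \<in> obj K"
    using tri_obj by blast
qed simp

lemma thick_Inter: assumes "\<And>T. T \<in> F \<Longrightarrow> thick K T" shows "thick K (obj K \<inter> \<Inter>F)"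
proof -
  define A where "A = insert (obj K) F"
  have t: "\<And>T. T \<in> A \<Longrightarrow> thick K T" using assms thick_obj unfolding A_def by blast
  have e: "obj K \<inter> \<Inter>F = \<Inter>A" unfolding A_def by blast
  show ?thesis unfolding e
  proof (rule thickI)
    show "\<Inter> A \<subseteq> obj K" unfolding A_def by blast
  next
    fix Z assume z: "zero_obj K Z"
    show "Z \<in> \<Inter> A"
    proof
      fix T assume T: "T \<in> A" show "Z \<in> T" using thickD(2)[OF t[OF T] z] .
    qed
  next
    fix X Y assume x: "X \<in> \<Inter> A" and i: "isomorphic K X Y"
    show "Y \<in> \<Inter> A"
    proof
      fix T assume T: "T \<in> A" then have "X \<in> T" using x by blast
      then show "Y \<in> T" using thickD(3)[OF t[OF T] _ i] by blast
    qed
  next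
    fix X assume X: "X \<in> obj K"
    show "(shO K X \<in> \<Inter> A) = (X \<in> \<Inter> A)"
    proof
      assume a: "shO K X \<in> \<Inter> A"
      show "X \<in> \<Inter> A"
      proof
        fix T assume T: "T \<in> A" then have "shO K X \<in> T" using a by blast
        then show "X \<in> T" using thickD(4)[OF t[OF T] X] by blast
      qed
    next
      assume a: "X \<in> \<Inter> A"
      show "shO K X \<in> \<Inter> A"
      proof
        fix T assume T: "T \<in> A" then have "X \<in> T" using a by blast
        then show "shO K X \<in> T" using thickD(4)[OF t[OF T] X] by blast
      qed
    qed
  next
    fix X Y Z f g h assume tr: "(X, Y, Z, f, g, h) \<in> tri K" and a: "X \<in> \<Inter> A" "Y \<in> \<Inter> A"
    show "Z \<in> \<Inter> A"
    proof
      fix T assume T: "T \<in> A" then have "X \<in> T" "Y \<in> T" using a by blast+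
      then show "Z \<in> T" using thickD(5)[OF t[OF T] tr] by blast
    qed
  next
    fix X Y Z f g h assume tr: "(X, Y, Z, f, g, h) \<in> tri K" and a: "Y \<in> \<Inter> A" "Z \<in> \<Inter> A"
    show "X \<in> \<Inter> A"
    proof
      fix T assume T: "T \<in> A" then have "Y \<in> T" "Z \<in> T" using a by blast+
      then show "X \<in> T" using thickD(5)[OF t[OF T] tr] by blast
    qed
  next
    fix X Y Z f g h assume tr: "(X, Y, Z, f, g, h) \<in> tri K" and a: "X \<in> \<Inter> A" "Z \<in> \<Inter> A"
    show "Y \<in> \<Inter> A"
    proof
      fix T assume T: "T \<in> A" then have "X \<in> T" "Z \<in> T" using a by blast+
      then show "Y \<in> T" using thickD(5)[OF t[OF T] tr] by blast
    qed
  next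
    fix X Y S assume b: "is_biprod K X Y S" and a: "S \<in> \<Inter> A"
    show "X \<in> \<Inter> A"
    proof
      fix T assume T: "T \<in> A" then have "S \<in> T" using a by blast
      then show "X \<in> T" using thickD(6)[OF t[OF T] b] by blast
    qed
  qed
qed

lemma thick_preL: assumes P: "thick K P" and W: "W \<in> obj K"
  shows "thick K {X \<in> obj K. tensO K X W \<in> P}"
proof (rule thickI)
  show "{X \<in> obj K. tensO K X W \<in> P} \<subseteq> obj K" by (rule subsetI) simp
next
  fix Z assume z: "zero_obj K Z"
  have Zo: "Z \<in> obj K" using zero_obj_id[OF z] by (rule conjunct1)
  have "zero_obj K (tensO K Z W)" using zero_tens[OF z W] by (rule conjunct1)
  then have "tensO K Z W \<in> P" by (rule thickD(2)[OF P])
  then show "Z \<in> {X \<in> obj K. tensO K X W \<in> P}" using Zo by simp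
next
  fix X Y assume a: "X \<in> {X \<in> obj K. tensO K X W \<in> P}" "isomorphic K X Y"
  have i: "isomorphic K (tensO K X W) (tensO K Y W)" using iso_tensL[OF a(2) W] .
  have x: "tensO K X W \<in> P" using a(1) by simp
  have y: "tensO K Y W \<in> P" by (rule thickD(3)[OF P x i])
  have Yo: "Y \<in> obj K" using iso_obj[OF a(2)] by (rule conjunct2)
  show "Y \<in> {X \<in> obj K. tensO K X W \<in> P}" using y Yo by simp
next
  fix X assume X: "X \<in> obj K"
  have si0: "is_iso K (sigL K X W) (tensO K (shO K X) W) (shO K (tensO K X W))"
    using sig_iso[OF W X] by (rule conjunct1)
  have si: "isomorphic K (tensO K (shO K X) W) (shO K (tensO K X W))" by (rule is_iso_isomorphic[OF si0])
  have tXo: "tensO K X W \<in> obj K" using tens_obj X W by simp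
  have e: "shO K (tensO K X W) \<in> P \<longleftrightarrow> tensO K X W \<in> P" by (rule thickD(4)[OF P tXo])
  have sXo: "shO K X \<in> obj K" using sh_obj X by simp
  show "(shO K X \<in> {X \<in> obj K. tensO K X W \<in> P}) = (X \<in> {X \<in> obj K. tensO K X W \<in> P})"
  proof
    assume "shO K X \<in> {X \<in> obj K. tensO K X W \<in> P}"
    then have "tensO K (shO K X) W \<in> P" by simp
    then have "shO K (tensO K X W) \<in> P" using thickD(3)[OF P _ si] by simp
    then show "X \<in> {X \<in> obj K. tensO K X W \<in> P}" using e X by simp
  next
    assume "X \<in> {X \<in> obj K. tensO K X W \<in> P}"
    then have "shO K (tensO K X W) \<in> P" using e by simp
    then have "tensO K (shO K X) W \<in> P" using thickD(3)[OF P _ iso_sym[OF si]] by simp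
    then show "shO K X \<in> {X \<in> obj K. tensO K X W \<in> P}" using sXo by simp
  qed
next
  fix X Y Z f g h assume t: "(X, Y, Z, f, g, h) \<in> tri K" and a: "X \<in> {X \<in> obj K. tensO K X W \<in> P}" "Y \<in> {X \<in> obj K. tensO K X W \<in> P}"
  have o: "X \<in> obj K \<and> Y \<in> obj K \<and> Z \<in> obj K" using tri_obj t by simp
  obtain f' g' h' where tt: "(tensO K X W, tensO K Y W, tensO K Z W, f', g', h') \<in> tri K"
    using tens_tri[OF W t] by blast
  have "tensO K Z W \<in> P" using thickD(5)[OF P tt] a by simp
  then show "Z \<in> {X \<in> obj K. tensO K X W \<in> P}" using o by simp
next
  fix X Y Z f g h assume t: "(X, Y, Z, f, g, h) \<in> tri K" and a: "Y \<in> {X \<in> obj K. tensO K X W \<in> P}" "Z \<in> {X \<in> obj K. tensO K X W \<in> P}"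
  have o: "X \<in> obj K \<and> Y \<in> obj K \<and> Z \<in> obj K" using tri_obj t by simp
  obtain f' g' h' where tt: "(tensO K X W, tensO K Y W, tensO K Z W, f', g', h') \<in> tri K"
    using tens_tri[OF W t] by blast
  have "tensO K X W \<in> P" using thickD(5)[OF P tt] a by simp
  then show "X \<in> {X \<in> obj K. tensO K X W \<in> P}" using o by simp
next
  fix X Y Z f g h assume t: "(X, Y, Z, f, g, h) \<in> tri K" and a: "X \<in> {X \<in> obj K. tensO K X W \<in> P}" "Z \<in> {X \<in> obj K. tensO K X W \<in> P}"
  have o: "X \<in> obj K \<and> Y \<in> obj K \<and> Z \<in> obj K" using tri_obj t by simp
  obtain f' g' h' where tt: "(tensO K X W, tensO K Y W, tensO K Z W, f', g', h') \<in> tri K"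
    using tens_tri[OF W t] by blast
  have "tensO K Y W \<in> P" using thickD(5)[OF P tt] a by simp
  then show "Y \<in> {X \<in> obj K. tensO K X W \<in> P}" using o by simp
next
  fix X Y S assume b: "is_biprod K X Y S" "S \<in> {X \<in> obj K. tensO K X W \<in> P}"
  have bb: "is_biprod K (tensO K X W) (tensO K Y W) (tensO K S W)" using biprod_tens[OF b(1) W] by (rule conjunct1)
  have "tensO K S W \<in> P" using b(2) by simp
  then have "tensO K X W \<in> P" by (rule thickD(6)[OF P bb])
  moreover have "X \<in> obj K" using b(1) unfolding is_biprod_def by (rule conjunct1)
  ultimately show "X \<in> {X \<in> obj K. tensO K X W \<in> P}" by simp
qed

lemma thick_preR: assumes P: "thick K P" and W: "W \<in> obj K"
  shows "thick K {X \<in> obj K. tensO K W X \<in> P}"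
proof (rule thickI)
  show "{X \<in> obj K. tensO K W X \<in> P} \<subseteq> obj K" by (rule subsetI) simp
next
  fix Z assume z: "zero_obj K Z"
  have Zo: "Z \<in> obj K" using zero_obj_id[OF z] by (rule conjunct1)
  have "zero_obj K (tensO K W Z)" using zero_tens[OF z W] by (rule conjunct2)
  then have "tensO K W Z \<in> P" by (rule thickD(2)[OF P])
  then show "Z \<in> {X \<in> obj K. tensO K W X \<in> P}" using Zo by simp
next
  fix X Y assume a: "X \<in> {X \<in> obj K. tensO K W X \<in> P}" "isomorphic K X Y"
  have i: "isomorphic K (tensO K W X) (tensO K W Y)" using iso_tensR[OF a(2) W] .
  have x: "tensO K W X \<in> P" using a(1) by simp
  have y: "tensO K W Y \<in> P" by (rule thickD(3)[OF P x i])
  have Yo: "Y \<in> obj K" using iso_obj[OF a(2)] by (rule conjunct2)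
  show "Y \<in> {X \<in> obj K. tensO K W X \<in> P}" using y Yo by simp
next
  fix X assume X: "X \<in> obj K"
  have si0: "is_iso K (sigR K W X) (tensO K W (shO K X)) (shO K (tensO K W X))"
    using sig_iso[OF W X] by (rule conjunct2)
  have si: "isomorphic K (tensO K W (shO K X)) (shO K (tensO K W X))" by (rule is_iso_isomorphic[OF si0])
  have tXo: "tensO K W X \<in> obj K" using tens_obj X W by simp
  have e: "shO K (tensO K W X) \<in> P \<longleftrightarrow> tensO K W X \<in> P" by (rule thickD(4)[OF P tXo])
  have sXo: "shO K X \<in> obj K" using sh_obj X by simp
  show "(shO K X \<in> {X \<in> obj K. tensO K W X \<in> P}) = (X \<in> {X \<in> obj K. tensO K W X \<in> P})"
  proof
    assume "shO K X \<in> {X \<in> obj K. tensO K W X \<in> P}"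
    then have "tensO K W (shO K X) \<in> P" by simp
    then have "shO K (tensO K W X) \<in> P" using thickD(3)[OF P _ si] by simp
    then show "X \<in> {X \<in> obj K. tensO K W X \<in> P}" using e X by simp
  next
    assume "X \<in> {X \<in> obj K. tensO K W X \<in> P}"
    then have "shO K (tensO K W X) \<in> P" using e by simp
    then have "tensO K W (shO K X) \<in> P" using thickD(3)[OF P _ iso_sym[OF si]] by simp
    then show "shO K X \<in> {X \<in> obj K. tensO K W X \<in> P}" using sXo by simp
  qed
next
  fix X Y Z f g h assume t: "(X, Y, Z, f, g, h) \<in> tri K" and a: "X \<in> {X \<in> obj K. tensO K W X \<in> P}" "Y \<in> {X \<in> obj K. tensO K W X \<in> P}"
  have o: "X \<in> obj K \<and> Y \<in> obj K \<and> Z \<in> obj K" using tri_obj t by simp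
  obtain f' g' h' where tt: "(tensO K W X, tensO K W Y, tensO K W Z, f', g', h') \<in> tri K"
    using tens_tri[OF W t] by blast
  have "tensO K W Z \<in> P" using thickD(5)[OF P tt] a by simp
  then show "Z \<in> {X \<in> obj K. tensO K W X \<in> P}" using o by simp
next
  fix X Y Z f g h assume t: "(X, Y, Z, f, g, h) \<in> tri K" and a: "Y \<in> {X \<in> obj K. tensO K W X \<in> P}" "Z \<in> {X \<in> obj K. tensO K W X \<in> P}"
  have o: "X \<in> obj K \<and> Y \<in> obj K \<and> Z \<in> obj K" using tri_obj t by simp
  obtain f' g' h' where tt: "(tensO K W X, tensO K W Y, tensO K W Z, f', g', h') \<in> tri K"
    using tens_tri[OF W t] by blast
  have "tensO K W X \<in> P" using thickD(5)[OF P tt] a by simp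
  then show "X \<in> {X \<in> obj K. tensO K W X \<in> P}" using o by simp
next
  fix X Y Z f g h assume t: "(X, Y, Z, f, g, h) \<in> tri K" and a: "X \<in> {X \<in> obj K. tensO K W X \<in> P}" "Z \<in> {X \<in> obj K. tensO K W X \<in> P}"
  have o: "X \<in> obj K \<and> Y \<in> obj K \<and> Z \<in> obj K" using tri_obj t by simp
  obtain f' g' h' where tt: "(tensO K W X, tensO K W Y, tensO K W Z, f', g', h') \<in> tri K"
    using tens_tri[OF W t] by blast
  have "tensO K W Y \<in> P" using thickD(5)[OF P tt] a by simp
  then show "Y \<in> {X \<in> obj K. tensO K W X \<in> P}" using o by simp
next
  fix X Y S assume b: "is_biprod K X Y S" "S \<in> {X \<in> obj K. tensO K W X \<in> P}"
  have bb: "is_biprod K (tensO K W X) (tensO K W Y) (tensO K W S)" using biprod_tens[OF b(1) W] by (rule conjunct2)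
  have "tensO K W S \<in> P" using b(2) by simp
  then have "tensO K W X \<in> P" by (rule thickD(6)[OF P bb])
  moreover have "X \<in> obj K" using b(1) unfolding is_biprod_def by (rule conjunct1)
  ultimately show "X \<in> {X \<in> obj K. tensO K W X \<in> P}" by simp
qed


lemma thick_fam: assumes "\<And>i. i \<in> Idx \<Longrightarrow> thick K (S i)"
  shows "thick K {x \<in> obj K. \<forall>i \<in> Idx. x \<in> S i}"
proof -
  have "{x \<in> obj K. \<forall>i \<in> Idx. x \<in> S i} = obj K \<inter> \<Inter>(S ` Idx)" by blast
  moreover have "thick K (obj K \<inter> \<Inter>(S ` Idx))" by (rule thick_Inter) (use assms in blast)
  ultimately show ?thesis by simp
qed

lemma tidealI: "thick K I \<Longrightarrow> (\<And>X Y. X \<in> I \<Longrightarrow> Y \<in> obj K \<Longrightarrow> tensO K X Y \<in> I) \<Longrightarrow>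
   (\<And>X Y. X \<in> I \<Longrightarrow> Y \<in> obj K \<Longrightarrow> tensO K Y X \<in> I) \<Longrightarrow> thick_ideal K I"
  unfolding thick_ideal_def by blast
lemma tidealD: assumes "thick_ideal K I" shows "thick K I"
  "\<And>X Y. X \<in> I \<Longrightarrow> Y \<in> obj K \<Longrightarrow> tensO K X Y \<in> I"
  "\<And>X Y. X \<in> I \<Longrightarrow> Y \<in> obj K \<Longrightarrow> tensO K Y X \<in> I"
  using assms unfolding thick_ideal_def by blast+

definition hull :: "'o set \<Rightarrow> 'o set" where
  "hull X = obj K \<inter> \<Inter>{T. thick_ideal K T \<and> X \<subseteq> T}"

lemma hull_ideal: "thick_ideal K (hull X)"
proof (rule tidealI)
  show "thick K (hull X)" unfolding hull_def by (rule thick_Inter) (use tidealD(1) in blast)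
  show "\<And>x Y. x \<in> hull X \<Longrightarrow> Y \<in> obj K \<Longrightarrow> tensO K x Y \<in> hull X"
    unfolding hull_def using tidealD(2) tens_obj by blast
  show "\<And>x Y. x \<in> hull X \<Longrightarrow> Y \<in> obj K \<Longrightarrow> tensO K Y x \<in> hull X"
    unfolding hull_def using tidealD(3) tens_obj by blast
qed
lemma hull_sub: "X \<subseteq> obj K \<Longrightarrow> X \<subseteq> hull X" unfolding hull_def by blast
lemma hull_min: "thick_ideal K T \<Longrightarrow> X \<subseteq> T \<Longrightarrow> hull X \<subseteq> T" unfolding hull_def by blast
lemma hull_obj: "hull X \<subseteq> obj K" unfolding hull_def by blast

lemma ideal_iso: "thick_ideal K Q \<Longrightarrow> X \<in> Q \<Longrightarrow> isomorphic K X Y \<Longrightarrow> Y \<in> Q"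
  using thickD(3)[OF tidealD(1)] by blast
lemma ideal_iso': "thick_ideal K Q \<Longrightarrow> X \<in> Q \<Longrightarrow> isomorphic K Y X \<Longrightarrow> Y \<in> Q"
  using thickD(3)[OF tidealD(1)] iso_sym by blast

lemma assoc_isomorphic: "X \<in> obj K \<Longrightarrow> Y \<in> obj K \<Longrightarrow> Z \<in> obj K \<Longrightarrow>
   isomorphic K (tensO K (tensO K X Y) Z) (tensO K X (tensO K Y Z))"
  using assoc_iso is_iso_isomorphic by blast

lemma i1: "a \<in> obj K \<Longrightarrow> Z \<in> obj K \<Longrightarrow> W \<in> obj K \<Longrightarrow> b \<in> obj K \<Longrightarrow>
  isomorphic K (tensO K (tensO K (tensO K a Z) W) b) (tensO K (tensO K a (tensO K Z W)) b)"
  using iso_tensL assoc_isomorphic by blast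
lemma i2: assumes "a \<in> obj K" "Z \<in> obj K" "W \<in> obj K" "b \<in> obj K" shows
  "isomorphic K (tensO K (tensO K (tensO K Z a) W) b) (tensO K Z (tensO K (tensO K a W) b))"
proof -
  have 1: "isomorphic K (tensO K (tensO K (tensO K Z a) W) b) (tensO K (tensO K Z (tensO K a W)) b)"
    using iso_tensL assoc_isomorphic assms by blast
  have 2: "isomorphic K (tensO K (tensO K Z (tensO K a W)) b) (tensO K Z (tensO K (tensO K a W) b))"
    using assoc_isomorphic assms tens_obj by blast
  show ?thesis using iso_trans[OF 1 2] .
qed
lemma i3: "a \<in> obj K \<Longrightarrow> Z \<in> obj K \<Longrightarrow> W \<in> obj K \<Longrightarrow> b \<in> obj K \<Longrightarrow>
  isomorphic K (tensO K (tensO K a W) (tensO K b Z)) (tensO K (tensO K (tensO K a W) b) Z)"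
  by (rule iso_sym, rule assoc_isomorphic, rule tens_obj) auto
lemma i4: assumes "a \<in> obj K" "Z \<in> obj K" "W \<in> obj K" "b \<in> obj K" shows
  "isomorphic K (tensO K (tensO K a W) (tensO K Z b)) (tensO K (tensO K a (tensO K W Z)) b)"
proof -
  have 1: "isomorphic K (tensO K (tensO K a W) (tensO K Z b)) (tensO K (tensO K (tensO K a W) Z) b)"
    by (rule iso_sym, rule assoc_isomorphic, rule tens_obj) (use assms in auto)
  have 2: "isomorphic K (tensO K (tensO K (tensO K a W) Z) b) (tensO K (tensO K a (tensO K W Z)) b)"
    using iso_tensL assoc_isomorphic assms by blast
  show ?thesis using iso_trans[OF 1 2] .
qed
lemma i5: "a \<in> obj K \<Longrightarrow> b \<in> obj K \<Longrightarrow>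
  isomorphic K (tensO K (tensO K a (unitO K)) b) (tensO K a b)"
  using iso_tensL unit_iso(2) is_iso_isomorphic by blast
lemma i6: "X \<in> obj K \<Longrightarrow> isomorphic K (tensO K (unitO K) X) X"
  using unit_iso(1) is_iso_isomorphic by blast


lemma pre2_thick: assumes Q: "thick K Q" and a: "a \<in> obj K" and b: "b \<in> obj K"
  shows "thick K {x \<in> obj K. tensO K (tensO K x a) b \<in> Q}"
    and "thick K {x \<in> obj K. tensO K (tensO K a x) b \<in> Q}"
proof -
  have P': "thick K {Y \<in> obj K. tensO K Y b \<in> Q}" by (rule thick_preL[OF Q b])
  have "{x \<in> obj K. tensO K (tensO K x a) b \<in> Q} = {x \<in> obj K. tensO K x a \<in> {Y \<in> obj K. tensO K Y b \<in> Q}}"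
    using tens_obj a by auto
  then show "thick K {x \<in> obj K. tensO K (tensO K x a) b \<in> Q}" using thick_preL[OF P' a] by simp
  have "{x \<in> obj K. tensO K (tensO K a x) b \<in> Q} = {x \<in> obj K. tensO K a x \<in> {Y \<in> obj K. tensO K Y b \<in> Q}}"
    using tens_obj a by auto
  then show "thick K {x \<in> obj K. tensO K (tensO K a x) b \<in> Q}" using thick_preR[OF P' a] by simp
qed

lemma Ua_ideal: assumes Q: "thick_ideal K Q" and a: "a \<in> obj K"
  shows "thick_ideal K {b \<in> obj K. \<forall>W \<in> obj K. tensO K (tensO K a W) b \<in> Q}"
proof (rule tidealI)
  have "thick K {b \<in> obj K. \<forall>W \<in> obj K. b \<in> {x \<in> obj K. tensO K (tensO K a W) x \<in> Q}}"
  proof (rule thick_fam)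
    fix W assume W: "W \<in> obj K"
    show "thick K {x \<in> obj K. tensO K (tensO K a W) x \<in> Q}"
      by (rule thick_preR[OF tidealD(1)[OF Q]]) (use tens_obj a W in simp)
  qed
  moreover have "{b \<in> obj K. \<forall>W \<in> obj K. b \<in> {x \<in> obj K. tensO K (tensO K a W) x \<in> Q}}
     = {b \<in> obj K. \<forall>W \<in> obj K. tensO K (tensO K a W) b \<in> Q}" by auto
  ultimately show "thick K {b \<in> obj K. \<forall>W \<in> obj K. tensO K (tensO K a W) b \<in> Q}" by simp
next
  fix b Z assume b: "b \<in> {b \<in> obj K. \<forall>W \<in> obj K. tensO K (tensO K a W) b \<in> Q}" and Z: "Z \<in> obj K"
  have bo: "b \<in> obj K" using b by simp
  show "tensO K b Z \<in> {b \<in> obj K. \<forall>W \<in> obj K. tensO K (tensO K a W) b \<in> Q}"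
  proof (simp add: tens_obj bo Z, intro ballI)
    fix W assume W: "W \<in> obj K"
    have "tensO K (tensO K a W) b \<in> Q" using b W by simp
    then have "tensO K (tensO K (tensO K a W) b) Z \<in> Q" using tidealD(2)[OF Q] Z by blast
    then show "tensO K (tensO K a W) (tensO K b Z) \<in> Q"
      by (rule ideal_iso'[OF Q]) (rule i3[OF a Z W bo])
  qed
  show "tensO K Z b \<in> {b \<in> obj K. \<forall>W \<in> obj K. tensO K (tensO K a W) b \<in> Q}"
  proof (simp add: tens_obj bo Z, intro ballI)
    fix W assume W: "W \<in> obj K"
    have "tensO K (tensO K a (tensO K W Z)) b \<in> Q" using b W Z tens_obj by simp
    then show "tensO K (tensO K a W) (tensO K Z b) \<in> Q"
      by (rule ideal_iso'[OF Q]) (rule i4[OF a Z W bo])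
  qed
qed

lemma Ta_ideal: assumes Q: "thick_ideal K Q" and H2: "H2 \<subseteq> obj K"
  shows "thick_ideal K {a \<in> obj K. \<forall>W \<in> obj K. \<forall>b \<in> H2. tensO K (tensO K a W) b \<in> Q}"
proof (rule tidealI)
  have "thick K {a \<in> obj K. \<forall>i \<in> obj K \<times> H2. a \<in> {x \<in> obj K. tensO K (tensO K x (fst i)) (snd i) \<in> Q}}"
  proof (rule thick_fam)
    fix i assume i: "i \<in> obj K \<times> H2"
    show "thick K {x \<in> obj K. tensO K (tensO K x (fst i)) (snd i) \<in> Q}"
      by (rule pre2_thick(1)[OF tidealD(1)[OF Q]]) (use i H2 in auto)
  qed
  moreover have "{a \<in> obj K. \<forall>i \<in> obj K \<times> H2. a \<in> {x \<in> obj K. tensO K (tensO K x (fst i)) (snd i) \<in> Q}}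
     = {a \<in> obj K. \<forall>W \<in> obj K. \<forall>b \<in> H2. tensO K (tensO K a W) b \<in> Q}" by auto
  ultimately show "thick K {a \<in> obj K. \<forall>W \<in> obj K. \<forall>b \<in> H2. tensO K (tensO K a W) b \<in> Q}" by simp
next
  fix a Z assume a: "a \<in> {a \<in> obj K. \<forall>W \<in> obj K. \<forall>b \<in> H2. tensO K (tensO K a W) b \<in> Q}" and Z: "Z \<in> obj K"
  have ao: "a \<in> obj K" using a by simp
  show "tensO K a Z \<in> {a \<in> obj K. \<forall>W \<in> obj K. \<forall>b \<in> H2. tensO K (tensO K a W) b \<in> Q}"
  proof (simp add: tens_obj ao Z, intro ballI)
    fix W b assume W: "W \<in> obj K" and b: "b \<in> H2"
    have bo: "b \<in> obj K" using b H2 by blast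
    have "tensO K (tensO K a (tensO K Z W)) b \<in> Q" using a W Z b tens_obj by simp
    then show "tensO K (tensO K (tensO K a Z) W) b \<in> Q"
      by (rule ideal_iso'[OF Q]) (rule i1[OF ao Z W bo])
  qed
  show "tensO K Z a \<in> {a \<in> obj K. \<forall>W \<in> obj K. \<forall>b \<in> H2. tensO K (tensO K a W) b \<in> Q}"
  proof (simp add: tens_obj ao Z, intro ballI)
    fix W b assume W: "W \<in> obj K" and b: "b \<in> H2"
    have bo: "b \<in> obj K" using b H2 by blast
    have "tensO K (tensO K a W) b \<in> Q" using a W b by simp
    then have "tensO K Z (tensO K (tensO K a W) b) \<in> Q" using tidealD(3)[OF Q] Z by blast
    then show "tensO K (tensO K (tensO K Z a) W) b \<in> Q"
      by (rule ideal_iso'[OF Q]) (rule i2[OF ao Z W bo])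
  qed
qed

lemma gen_lemma: assumes Q: "thick_ideal K Q" and I: "I \<subseteq> obj K" and J: "J \<subseteq> obj K"
  and H: "\<And>a b W. a \<in> I \<Longrightarrow> b \<in> J \<Longrightarrow> W \<in> obj K \<Longrightarrow> tensO K (tensO K a W) b \<in> Q"
  and a: "a \<in> hull (Q \<union> I)" and b: "b \<in> hull (Q \<union> J)" and W: "W \<in> obj K"
  shows "tensO K (tensO K a W) b \<in> Q"
proof -
  have Qo: "Q \<subseteq> obj K" using thickD(1)[OF tidealD(1)[OF Q]] .
  have step1: "hull (Q \<union> J) \<subseteq> {b \<in> obj K. \<forall>W \<in> obj K. tensO K (tensO K a' W) b \<in> Q}"
    if a': "a' \<in> I" for a'
  proof (rule hull_min[OF Ua_ideal[OF Q]])
    show "a' \<in> obj K" using a' I by blast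
    show "Q \<union> J \<subseteq> {b \<in> obj K. \<forall>W \<in> obj K. tensO K (tensO K a' W) b \<in> Q}"
    proof
      fix b assume "b \<in> Q \<union> J"
      then show "b \<in> {b \<in> obj K. \<forall>W \<in> obj K. tensO K (tensO K a' W) b \<in> Q}"
      proof
        assume b: "b \<in> Q"
        have "\<forall>W \<in> obj K. tensO K (tensO K a' W) b \<in> Q"
          using tidealD(3)[OF Q b] tens_obj a' I by blast
        then show ?thesis using b Qo by blast
      next
        assume b: "b \<in> J"
        show ?thesis using H[OF a' b] b J by blast
      qed
    qed
  qed
  have step2: "hull (Q \<union> I) \<subseteq> {a \<in> obj K. \<forall>W \<in> obj K. \<forall>b \<in> hull (Q \<union> J). tensO K (tensO K a W) b \<in> Q}"
  proof (rule hull_min[OF Ta_ideal[OF Q hull_obj]])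
    show "Q \<union> I \<subseteq> {a \<in> obj K. \<forall>W \<in> obj K. \<forall>b \<in> hull (Q \<union> J). tensO K (tensO K a W) b \<in> Q}"
    proof
      fix a assume "a \<in> Q \<union> I"
      then show "a \<in> {a \<in> obj K. \<forall>W \<in> obj K. \<forall>b \<in> hull (Q \<union> J). tensO K (tensO K a W) b \<in> Q}"
      proof
        assume a: "a \<in> Q"
        have "\<forall>W \<in> obj K. \<forall>b \<in> hull (Q \<union> J). tensO K (tensO K a W) b \<in> Q"
          using tidealD(2)[OF Q] a hull_obj by blast
        then show ?thesis using a Qo by blast
      next
        assume a: "a \<in> I"
        show ?thesis using step1[OF a] a I by blast
      qed
    qed
  qed
  show ?thesis using step2 a b W by blast
qed


lemma primeD: assumes "prime_ideal K P" shows "thick_ideal K P" "P \<noteq> obj K"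
  "\<And>I J. thick_ideal K I \<Longrightarrow> thick_ideal K J \<Longrightarrow> (\<forall>X \<in> I. \<forall>Y \<in> J. tensO K X Y \<in> P) \<Longrightarrow> I \<subseteq> P \<or> J \<subseteq> P"
  using assms unfolding prime_ideal_def by blast+

lemma prime_AB: assumes P: "prime_ideal K P" and B: "B \<in> obj K" and C: "C \<in> obj K"
  and H: "\<And>X. X \<in> obj K \<Longrightarrow> tensO K (tensO K B X) C \<in> P"
  shows "B \<in> P \<or> C \<in> P"
proof -
  have Q: "thick_ideal K P" by (rule primeD(1)[OF P])
  have Po: "P \<subseteq> obj K" using thickD(1)[OF tidealD(1)[OF Q]] .
  have "\<forall>X \<in> hull (P \<union> {B}). \<forall>Y \<in> hull (P \<union> {C}). tensO K X Y \<in> P"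
  proof (intro ballI)
    fix a b assume a: "a \<in> hull (P \<union> {B})" and b: "b \<in> hull (P \<union> {C})"
    have "tensO K (tensO K a (unitO K)) b \<in> P"
      by (rule gen_lemma[OF Q _ _ _ a b unit_obj]) (use B C H in auto)
    moreover have "isomorphic K (tensO K (tensO K a (unitO K)) b) (tensO K a b)"
      by (rule i5) (use a b hull_obj in auto)
    ultimately show "tensO K a b \<in> P" by (rule ideal_iso[OF Q])
  qed
  then have "hull (P \<union> {B}) \<subseteq> P \<or> hull (P \<union> {C}) \<subseteq> P"
    using primeD(3)[OF P hull_ideal hull_ideal] by blast
  moreover have "P \<union> {B} \<subseteq> hull (P \<union> {B})" by (rule hull_sub) (use Po B in simp)
  moreover have "P \<union> {C} \<subseteq> hull (P \<union> {C})" by (rule hull_sub) (use Po C in simp)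
  ultimately show ?thesis by auto
qed

lemma V_prod: assumes P: "prime_ideal K P" and G: "thick_generated_by K G"
  and B: "B \<in> obj K" and C: "C \<in> obj K"
  shows "tensO K (tensO K B G) C \<in> P \<longleftrightarrow> B \<in> P \<or> C \<in> P"
proof
  have Q: "thick_ideal K P" by (rule primeD(1)[OF P])
  have Go: "G \<in> obj K" using G unfolding thick_generated_by_def by blast
  assume h: "tensO K (tensO K B G) C \<in> P"
  have T: "thick K {x \<in> obj K. tensO K (tensO K B x) C \<in> P}"
    by (rule pre2_thick(2)[OF tidealD(1)[OF Q] B C])
  have "{x \<in> obj K. tensO K (tensO K B x) C \<in> P} = obj K"
    using G T h Go unfolding thick_generated_by_def by blast
  then show "B \<in> P \<or> C \<in> P" using prime_AB[OF P B C] by blast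
next
  have Q: "thick_ideal K P" by (rule primeD(1)[OF P])
  have Go: "G \<in> obj K" using G unfolding thick_generated_by_def by blast
  assume "B \<in> P \<or> C \<in> P"
  then show "tensO K (tensO K B G) C \<in> P"
  proof
    assume "B \<in> P" then show ?thesis using tidealD(2)[OF Q] Go C by blast
  next
    assume "C \<in> P" then show ?thesis using tidealD(3)[OF Q] Go B tens_obj by blast
  qed
qed

lemma unit_notin: assumes P: "prime_ideal K P" shows "unitO K \<notin> P"
proof
  assume u: "unitO K \<in> P"
  have Q: "thick_ideal K P" by (rule primeD(1)[OF P])
  have "obj K \<subseteq> P"
  proof
    fix X assume X: "X \<in> obj K"
    have "tensO K (unitO K) X \<in> P" using tidealD(2)[OF Q u X] .
    then show "X \<in> P" by (rule ideal_iso[OF Q _ i6[OF X]])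
  qed
  then show False using primeD(2)[OF P] thickD(1)[OF tidealD(1)[OF Q]] by blast
qed

lemma Vobj_unit: "Vobj K (unitO K) = Spc K"
  unfolding Vobj_def Spc_def using unit_notin by blast

lemma Vobj_prod: assumes G: "thick_generated_by K G" and B: "B \<in> obj K" and C: "C \<in> obj K"
  shows "Vobj K (tensO K (tensO K B G) C) = Vobj K B \<inter> Vobj K C"
  unfolding Vobj_def Spc_def using V_prod[OF _ G B C] by blast


inductive_set Mset :: "'o set \<Rightarrow> 'o \<Rightarrow> 'o set" for S G where
  Ms: "s \<in> S \<Longrightarrow> s \<in> Mset S G"
| Mu: "unitO K \<in> Mset S G"
| Mp: "m1 \<in> Mset S G \<Longrightarrow> m2 \<in> Mset S G \<Longrightarrow> tensO K (tensO K m1 G) m2 \<in> Mset S G"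

lemma M_obj: assumes S: "S \<subseteq> obj K" and G: "G \<in> obj K" shows "m \<in> Mset S G \<Longrightarrow> m \<in> obj K"
proof (induction m rule: Mset.induct)
  case (Ms s) then show ?case using S by blast
next
  case Mu then show ?case by (rule unit_obj)
next
  case (Mp m1 m2) then show ?case using tens_obj G by simp
qed

lemma M_fin: assumes S: "S \<subseteq> obj K" and G: "thick_generated_by K G"
  shows "m \<in> Mset S G \<Longrightarrow> \<exists>F. finite F \<and> F \<subseteq> S \<and> Vset K F \<subseteq> Vobj K m"
proof (induction m rule: Mset.induct)
  case (Ms s) then show ?case
    by (intro exI[of _ "{s}"]) (auto simp: Vset_def Vobj_def)
next
  case Mu then show ?case
    by (intro exI[of _ "{}"]) (auto simp: Vset_def Vobj_unit)
next
  case (Mp m1 m2)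
  have Go: "G \<in> obj K" using G unfolding thick_generated_by_def by blast
  have o: "m1 \<in> obj K" "m2 \<in> obj K" using M_obj[OF S Go] Mp.hyps by blast+
  obtain F1 F2 where F: "finite F1" "F1 \<subseteq> S" "Vset K F1 \<subseteq> Vobj K m1"
    "finite F2" "F2 \<subseteq> S" "Vset K F2 \<subseteq> Vobj K m2" using Mp.IH by blast
  have "Vset K (F1 \<union> F2) \<subseteq> Vobj K (tensO K (tensO K m1 G) m2)"
    unfolding Vobj_prod[OF G o] using F(3,6) unfolding Vset_def by blast
  then show ?case using F by (intro exI[of _ "F1 \<union> F2"]) auto
qed

lemma chain_ideal: assumes ne: "CC \<noteq> {}" and ch: "\<And>I. I \<in> CC \<Longrightarrow> thick_ideal K I"
  and cmp: "\<And>I J. I \<in> CC \<Longrightarrow> J \<in> CC \<Longrightarrow> I \<subseteq> J \<or> J \<subseteq> I"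
  shows "thick_ideal K (\<Union>CC)"
proof (rule tidealI)
  have t: "\<And>I. I \<in> CC \<Longrightarrow> thick K I" using ch tidealD(1) by blast
  have two: "\<exists>T \<in> CC. X \<in> T \<and> Y \<in> T" if xy: "X \<in> \<Union>CC" "Y \<in> \<Union>CC" for X Y
  proof -
    obtain I J where "I \<in> CC" "J \<in> CC" "X \<in> I" "Y \<in> J" using xy by blast
    then show ?thesis using cmp[of I J] by blast
  qed
  show "thick K (\<Union>CC)"
  proof (rule thickI)
    show "\<Union>CC \<subseteq> obj K" using thickD(1)[OF t] by blast
  next
    fix Z assume z: "zero_obj K Z"
    obtain I where I: "I \<in> CC" using ne by blast
    show "Z \<in> \<Union>CC" using thickD(2)[OF t[OF I] z] I by blast
  next
    fix X Y assume x: "X \<in> \<Union>CC" and i: "isomorphic K X Y"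
    then obtain I where I: "I \<in> CC" "X \<in> I" by blast
    show "Y \<in> \<Union>CC" using thickD(3)[OF t[OF I(1)] I(2) i] I by blast
  next
    fix X assume X: "X \<in> obj K"
    show "(shO K X \<in> \<Union>CC) = (X \<in> \<Union>CC)"
    proof
      assume "shO K X \<in> \<Union>CC"
      then obtain I where I: "I \<in> CC" "shO K X \<in> I" by blast
      have "X \<in> I" using thickD(4)[OF t[OF I(1)] X] I(2) by simp
      then show "X \<in> \<Union>CC" using I by blast
    next
      assume "X \<in> \<Union>CC"
      then obtain I where I: "I \<in> CC" "X \<in> I" by blast
      have "shO K X \<in> I" using thickD(4)[OF t[OF I(1)] X] I(2) by simp
      then show "shO K X \<in> \<Union>CC" using I by blast
    qed
  next
    fix X Y Z f g h assume tr: "(X, Y, Z, f, g, h) \<in> tri K" and a: "X \<in> \<Union>CC" "Y \<in> \<Union>CC"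
    obtain T where T: "T \<in> CC" "X \<in> T" "Y \<in> T" using two[OF a] by blast
    have "Z \<in> T" using thickD(5)[OF t[OF T(1)] tr] T(2,3) by simp
    then show "Z \<in> \<Union>CC" using T by blast
  next
    fix X Y Z f g h assume tr: "(X, Y, Z, f, g, h) \<in> tri K" and a: "Y \<in> \<Union>CC" "Z \<in> \<Union>CC"
    obtain T where T: "T \<in> CC" "Y \<in> T" "Z \<in> T" using two[OF a] by blast
    have "X \<in> T" using thickD(5)[OF t[OF T(1)] tr] T(2,3) by simp
    then show "X \<in> \<Union>CC" using T by blast
  next
    fix X Y Z f g h assume tr: "(X, Y, Z, f, g, h) \<in> tri K" and a: "X \<in> \<Union>CC" "Z \<in> \<Union>CC"
    obtain T where T: "T \<in> CC" "X \<in> T" "Z \<in> T" using two[OF a] by blast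
    have "Y \<in> T" using thickD(5)[OF t[OF T(1)] tr] T(2,3) by simp
    then show "Y \<in> \<Union>CC" using T by blast
  next
    fix X Y S assume b: "is_biprod K X Y S" and a: "S \<in> \<Union>CC"
    then obtain I where I: "I \<in> CC" "S \<in> I" by blast
    have "X \<in> I" by (rule thickD(6)[OF t[OF I(1)] b I(2)])
    then show "X \<in> \<Union>CC" using I by blast
  qed
next
  fix X Y assume "X \<in> \<Union>CC" "Y \<in> obj K"
  then obtain I where I: "I \<in> CC" "X \<in> I" by blast
  have "tensO K X Y \<in> I" by (rule tidealD(2)[OF ch[OF I(1)] I(2)]) fact
  then show "tensO K X Y \<in> \<Union>CC" using I by blast
next
  fix X Y assume "X \<in> \<Union>CC" "Y \<in> obj K"
  then obtain I where I: "I \<in> CC" "X \<in> I" by blast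
  have "tensO K Y X \<in> I" by (rule tidealD(3)[OF ch[OF I(1)] I(2)]) fact
  then show "tensO K Y X \<in> \<Union>CC" using I by blast
qed


lemma compact: assumes S: "S \<subseteq> obj K" and G: "thick_generated_by K G" and V: "Vset K S = {}"
  shows "\<exists>F. finite F \<and> F \<subseteq> S \<and> Vset K F = {}"
proof (rule ccontr)
  assume na: "\<not> ?thesis"
  have Go: "G \<in> obj K" using G unfolding thick_generated_by_def by blast
  let ?M = "Mset S G"
  have Mo: "?M \<subseteq> obj K" using M_obj[OF S Go] by blast
  have avoid: "\<exists>P. prime_ideal K P \<and> m \<notin> P" if m: "m \<in> ?M" for m
  proof -
    obtain F where F: "finite F" "F \<subseteq> S" "Vset K F \<subseteq> Vobj K m" using M_fin[OF S G m] by blast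
    have "Vset K F \<noteq> {}" using na F by blast
    then obtain P where "P \<in> Vobj K m" using F by blast
    then show ?thesis unfolding Vobj_def Spc_def by blast
  qed
  define Phi where "Phi = {I. thick_ideal K I \<and> I \<inter> ?M = {}}"
  have h0: "hull {} \<in> Phi"
  proof -
    have "hull {} \<inter> ?M = {}"
    proof (rule ccontr)
      assume "hull {} \<inter> ?M \<noteq> {}"
      then obtain m where m: "m \<in> hull {}" "m \<in> ?M" by blast
      obtain P where P: "prime_ideal K P" "m \<notin> P" using avoid[OF m(2)] by blast
      have "hull {} \<subseteq> P" by (rule hull_min[OF primeD(1)[OF P(1)]]) simp
      then show False using m P by blast
    qed
    then show ?thesis unfolding Phi_def using hull_ideal by blast
  qed
  have "\<exists>Q\<in>Phi. \<forall>X\<in>Phi. Q \<subseteq> X \<longrightarrow> X = Q"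
  proof (rule subset_Zorn_nonempty)
    show "Phi \<noteq> {}" using h0 by blast
  next
    fix CC assume ne: "CC \<noteq> {}" and ch: "subset.chain Phi CC"
    have c1: "CC \<subseteq> Phi" and c2: "\<And>I J. I \<in> CC \<Longrightarrow> J \<in> CC \<Longrightarrow> I \<subseteq> J \<or> J \<subseteq> I"
      using ch unfolding subset_chain_def by blast+
    have "thick_ideal K (\<Union>CC)"
      by (rule chain_ideal[OF ne _ c2]) (use c1 Phi_def in blast)
    moreover have "\<Union>CC \<inter> ?M = {}" using c1 unfolding Phi_def by blast
    ultimately show "\<Union>CC \<in> Phi" unfolding Phi_def by blast
  qed
  then obtain Q where QP: "Q \<in> Phi"
     and mx: "\<And>X. X \<in> Phi \<Longrightarrow> Q \<subseteq> X \<Longrightarrow> X = Q" by blast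
  have Q: "thick_ideal K Q" "Q \<inter> ?M = {}" using QP unfolding Phi_def by simp_all
  have Qo: "Q \<subseteq> obj K" using thickD(1)[OF tidealD(1)[OF Q(1)]] .
  have uM: "unitO K \<in> ?M" by (rule Mu)
  have big: "\<exists>m. m \<in> hull (Q \<union> I) \<and> m \<in> ?M" if I: "thick_ideal K I" "\<not> I \<subseteq> Q" for I
  proof (rule ccontr)
    assume "\<not> ?thesis"
    then have "hull (Q \<union> I) \<in> Phi" unfolding Phi_def using hull_ideal by blast
    moreover have Io: "I \<subseteq> obj K" using thickD(1)[OF tidealD(1)[OF I(1)]] .
    moreover have sub: "Q \<union> I \<subseteq> hull (Q \<union> I)" by (rule hull_sub) (use Qo Io in blast)
    ultimately have "hull (Q \<union> I) = Q" using mx by blast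
    then show False using sub I(2) by blast
  qed
  have prime: "prime_ideal K Q"
    unfolding prime_ideal_def
  proof (intro conjI allI impI)
    show "thick_ideal K Q" by (rule Q(1))
    show "Q \<noteq> obj K" using Q(2) uM unit_obj by blast
  next
    fix I J assume I: "thick_ideal K I" and J: "thick_ideal K J"
      and IJ: "\<forall>X\<in>I. \<forall>Y\<in>J. tensO K X Y \<in> Q"
    show "I \<subseteq> Q \<or> J \<subseteq> Q"
    proof (rule ccontr)
      assume "\<not> (I \<subseteq> Q \<or> J \<subseteq> Q)"
      then have nI: "\<not> I \<subseteq> Q" and nJ: "\<not> J \<subseteq> Q" by blast+
      obtain m1 where m1: "m1 \<in> hull (Q \<union> I)" "m1 \<in> ?M" using big[OF I nI] by blast
      obtain m2 where m2: "m2 \<in> hull (Q \<union> J)" "m2 \<in> ?M" using big[OF J nJ] by blast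
      have Io: "I \<subseteq> obj K" using thickD(1)[OF tidealD(1)[OF I]] .
      have Jo: "J \<subseteq> obj K" using thickD(1)[OF tidealD(1)[OF J]] .
      have "tensO K (tensO K m1 G) m2 \<in> Q"
      proof (rule gen_lemma[OF Q(1) Io Jo _ m1(1) m2(1) Go])
        fix a b W assume a: "a \<in> I" and b: "b \<in> J" and W: "W \<in> obj K"
        have "tensO K a W \<in> I" by (rule tidealD(2)[OF I a W])
        then show "tensO K (tensO K a W) b \<in> Q" using IJ b by blast
      qed
      moreover have "tensO K (tensO K m1 G) m2 \<in> ?M" by (rule Mp[OF m1(2) m2(2)])
      ultimately show False using Q(2) by blast
    qed
  qed
  have "S \<subseteq> ?M" using Ms by blast
  then have "Q \<in> Vset K S" unfolding Vset_def Spc_def using prime Q(2) by blast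
  then show False using V by blast
qed

lemma fin_obj: assumes G: "thick_generated_by K G" and A: "A \<in> obj K"
  shows "finite F \<Longrightarrow> F \<subseteq> obj K \<Longrightarrow> \<exists>A1 \<in> obj K. Vobj K A1 = Vobj K A \<inter> Vset K F"
proof (induction F rule: finite_induct)
  case empty then show ?case using A unfolding Vobj_def Vset_def by blast
next
  case (insert x F)
  obtain A1 where A1: "A1 \<in> obj K" "Vobj K A1 = Vobj K A \<inter> Vset K F" using insert by blast
  have x: "x \<in> obj K" using insert by blast
  have Go: "G \<in> obj K" using G unfolding thick_generated_by_def by blast
  have "Vobj K (tensO K (tensO K A1 G) x) = Vobj K A \<inter> Vset K (insert x F)"
    unfolding Vobj_prod[OF G A1(1) x] A1(2) unfolding Vset_def Vobj_def by blast
  moreover have "tensO K (tensO K A1 G) x \<in> obj K" using tens_obj A1(1) Go x by simp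
  ultimately show ?case by (intro bexI)
qed

end

lemma Vset_split: assumes "F \<subseteq> S1 \<union> S2" "P \<in> Vset K (F \<inter> S1)" "P \<in> Vset K (F \<inter> S2)"
  shows "P \<in> Vset K F"
  using assms unfolding Vset_def by blast

lemma side: assumes V: "Vobj K A = Vset K S1 \<union> Vset K S2" and F: "F \<subseteq> S1 \<union> S2" "Vset K F = {}"
  shows "Vset K S1 = Vobj K A \<inter> Vset K (F \<inter> S1)"
proof
  show "Vset K S1 \<subseteq> Vobj K A \<inter> Vset K (F \<inter> S1)"
  proof
    fix P assume P: "P \<in> Vset K S1"
    have "P \<in> Vobj K A" using P V by simp
    moreover have "P \<in> Vset K (F \<inter> S1)" using P unfolding Vset_def by blast
    ultimately show "P \<in> Vobj K A \<inter> Vset K (F \<inter> S1)" by simp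
  qed
  show "Vobj K A \<inter> Vset K (F \<inter> S1) \<subseteq> Vset K S1"
  proof
    fix P assume P: "P \<in> Vobj K A \<inter> Vset K (F \<inter> S1)"
    then have "P \<in> Vset K S1 \<or> P \<in> Vset K S2" using V by simp
    then show "P \<in> Vset K S1"
    proof
      assume "P \<in> Vset K S2"
      then have "P \<in> Vset K (F \<inter> S2)" unfolding Vset_def by blast
      then have "P \<in> Vset K F" using Vset_split[OF F(1)] P by blast
      then show ?thesis using F(2) by blast
    qed
  qed
qed

theorem mainTheorem19:
  fixes K :: "('o, 'm) mdc_struct" and G A :: 'o and S1 S2 :: "'o set"
  assumes "mdc K"
    and "thick_generated_by K G"
    and "A \<in> obj K"
    and "S1 \<subseteq> obj K" and "S2 \<subseteq> obj K"
    and "Vobj K A = Vset K S1 \<union> Vset K S2"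
    and "Vset K S1 \<inter> Vset K S2 = {}"
  shows "\<exists>A1 \<in> obj K. \<exists>A2 \<in> obj K. Vset K S1 = Vobj K A1 \<and> Vset K S2 = Vobj K A2"
proof -
  interpret mdcl K by (rule mdcl.intro) (rule assms(1))
  have V0: "Vset K (S1 \<union> S2) = {}" using assms(7) unfolding Vset_def by blast
  have So: "S1 \<union> S2 \<subseteq> obj K" using assms(4,5) by simp
  obtain F where F: "finite F" "F \<subseteq> S1 \<union> S2" "Vset K F = {}"
    using compact[OF So assms(2) V0] by blast
  have e1: "Vset K S1 = Vobj K A \<inter> Vset K (F \<inter> S1)" by (rule side[OF assms(6) F(2,3)])
  have F': "F \<subseteq> S2 \<union> S1" using F(2) by blast
  have V': "Vobj K A = Vset K S2 \<union> Vset K S1" using assms(6) by blast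
  have e2: "Vset K S2 = Vobj K A \<inter> Vset K (F \<inter> S2)" by (rule side[OF V' F' F(3)])
  obtain A1 where A1: "A1 \<in> obj K" "Vobj K A1 = Vobj K A \<inter> Vset K (F \<inter> S1)"
    using fin_obj[OF assms(2) assms(3), of "F \<inter> S1"] F(1) assms(4) by blast
  obtain A2 where A2: "A2 \<in> obj K" "Vobj K A2 = Vobj K A \<inter> Vset K (F \<inter> S2)"
    using fin_obj[OF assms(2) assms(3), of "F \<inter> S2"] F(1) assms(5) by blast
  show ?thesis using A1 A2 e1 e2 by blast
qed

end
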